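(* Let $S$ be a set of $n$ species and let $R$ be a set of $m$ rooted triplets on $S$. The algorithm BPMTR (described in the context), using any one of the six $e\_score$ functions, can be implemented to run in $O(mn^3)$ time.
   Context: A phylogenetic tree on $S$ is a rooted, unordered, binary tree whose leaves are distinctly labeled by the members of $S$. A rooted triplet on three species $x,y,z$, written $xy|z$, is the phylogenetic tree on $\{x,y,z\}$ in which $x$ and $y$ are siblings; a tree $T$ is consistent with $xy|z$ if $x,y,z$ are leaves of $T$ and the lowest common ancestor of $x$ and $y$ is a proper descendant of the lowest common ancestor of $x$ and $z$. For two disjoint trees $C_1, C_2$ (viewed also as their leaf sets) in a current collection of trees partitioning $S$, define: $w$ = number of triplets $ij|k\in R$ with $i\in C_1$, $j\in C_2$, $k\notin C_1\cup C_2$; $p$ = number of triplets $ij|k\in R$ with $i\in C_1$, $k\in C_2$, $j\notin C_1\cup C_2$; $t$ = number of triplets $ij|k\in R$ with $i\in C_1$, $j\in C_2$. The function $e\_score(C_1,C_2)$ is one fixed choice among the six alternatives $w$, $w/(w+p)$, $w/t$, $w-p$, $(w-p)/(w+p)$, $(w-p)/t$. Algorithm BPMTR: 1. Initialize a set $\mathcal T$ of $n$ one-node trees, one labeled by each species. 2. While $|\mathcal T|>1$: (a) Find and remove from $\mathcal T$ two trees $T_x,T_y$ with maximum $e\_score(T_x,T_y)$. (b) Let $T_{merge}$ be the tree obtained by adding a new root whose two children are the roots of $T_x$ and $T_y$; set $T_{best}:=T_{merge}$. (c) For every subtree $T_{sub}$ of $T_x$ (the subtree rooted at some node of $T_x$),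 let $T_{swapped}$ be the tree obtained from $T_{merge}$ by exchanging the positions of $T_{sub}$ and $T_y$; if $T_{swapped}$ is consistent with more triplets of $R$ than $T_{best}$, set $T_{best}:=T_{swapped}$. (d) Symmetrically, for every subtree $T_{sub}$ of $T_y$, let $T_{swapped}$ be obtained from $T_{merge}$ by exchanging the positions of $T_{sub}$ and $T_x$; if it is consistent with more triplets of $R$ than $T_{best}$, set $T_{best}:=T_{swapped}$. (e) Add $T_{best}$ to $\mathcal T$. 3. Return the unique tree in $\mathcal T$. Running time is measured in the standard RAM model. *)

theory Defs
  imports "HOL-Library.Time_Functions" "HOL-Library.Sublist" Complex_Main
begin

section \<open>Phylogenetic trees, triplets, consistency\<close>

text \<open>The child order of the
representation is irrelevant for consistency (trees are unordered in the paper).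
A rooted triplet xy|z is represented by the triple (x, y, z).\<close>

datatype 'a ptree = Leaf 'a | Node "'a ptree" "'a ptree"

fun leaves :: "'a ptree \<Rightarrow> 'a set" where
  "leaves (Leaf a) = {a}"
| "leaves (Node l r) = leaves l \<union> leaves r"

text \<open>Nodes are identified with their root-paths (False = left, True = right);
an ancestor is a prefix.  leaf_path gives the node of a leaf.\<close>

fun leaf_path :: "'a ptree \<Rightarrow> 'a \<Rightarrow> bool list option" where
  "leaf_path (Leaf b) a = (if a = b then Some [] else None)"
| "leaf_path (Node l r) a =
     (case leaf_path l a of
        Some p \<Rightarrow> Some (False # p)
      | None \<Rightarrow> (case leaf_path r a of Some p \<Rightarrow> Some (True # p) | None \<Rightarrow> None))"

text \<open>Lowest common ancestor of two nodes = longest common prefix of their paths.\<close>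
fun lcp :: "bool list \<Rightarrow> bool list \<Rightarrow> bool list" where
  "lcp (a # as) (b # bs) = (if a = b then a # lcp as bs else [])"
| "lcp _ _ = []"

definition lca :: "'a ptree \<Rightarrow> 'a \<Rightarrow> 'a \<Rightarrow> bool list" where
  "lca T x y = lcp (the (leaf_path T x)) (the (leaf_path T y))"

definition consistent :: "'a ptree \<Rightarrow> 'a \<times> 'a \<times> 'a \<Rightarrow> bool" where
  "consistent T t = (case t of (x, y, z) \<Rightarrow>
     x \<in> leaves T \<and> y \<in> leaves T \<and> z \<in> leaves T \<and> strict_prefix (lca T x z) (lca T x y))"

definition num_consistent :: "('a \<times> 'a \<times> 'a) set \<Rightarrow> 'a ptree \<Rightarrow> nat" where
  "num_consistent R T = card {t \<in> R. consistent T t}"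

text \<open>A set R of rooted triplets on S (xy|z and yx|z denote the same triplet, so at most
one of the two representations occurs in R; hence m = card R).\<close>
definition triplet_set_on :: "'a set \<Rightarrow> ('a \<times> 'a \<times> 'a) set \<Rightarrow> bool" where
  "triplet_set_on S R \<longleftrightarrow>
     (\<forall>(x, y, z) \<in> R. x \<in> S \<and> y \<in> S \<and> z \<in> S \<and> x \<noteq> y \<and> x \<noteq> z \<and> y \<noteq> z
                      \<and> (y, x, z) \<notin> R)"

fun cons_all :: "bool \<Rightarrow> bool list list \<Rightarrow> bool list list" where
  "cons_all b [] = []"
| "cons_all b (p # ps) = (b # p) # cons_all b ps"

fun positions :: "'a ptree \<Rightarrow> bool list list" where
  "positions (Leaf a) = [[]]"
| "positions (Node l r) = [] # (cons_all False (positions l) @ cons_all True (positions r))"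

fun subtree_at :: "'a ptree \<Rightarrow> bool list \<Rightarrow> 'a ptree" where
  "subtree_at t [] = t"
| "subtree_at (Node l r) (b # p) = (if b then subtree_at r p else subtree_at l p)"
| "subtree_at (Leaf a) (b # p) = Leaf a"

fun replace_at :: "'a ptree \<Rightarrow> bool list \<Rightarrow> 'a ptree \<Rightarrow> 'a ptree" where
  "replace_at t [] s = s"
| "replace_at (Node l r) (b # p) s =
     (if b then Node l (replace_at r p s) else Node (replace_at l p s) r)"
| "replace_at (Leaf a) (b # p) s = Leaf a"

text \<open>T_merge = Node Tx Ty.  Exchanging the subtree of Tx at position p with Ty,
resp. the subtree of Ty at position q with Tx.\<close>
fun swap_x :: "'a ptree \<Rightarrow> 'a ptree \<Rightarrow> bool list \<Rightarrow> 'a ptree" where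
  "swap_x tx ty p = Node (replace_at tx p ty) (subtree_at tx p)"

fun swap_y :: "'a ptree \<Rightarrow> 'a ptree \<Rightarrow> bool list \<Rightarrow> 'a ptree" where
  "swap_y tx ty q = Node (subtree_at ty q) (replace_at ty q tx)"

section \<open>The six e_score functions\<close>

definition cnt_w :: "('a \<times> 'a \<times> 'a) set \<Rightarrow> 'a set \<Rightarrow> 'a set \<Rightarrow> nat" where
  "cnt_w R C1 C2 = card {(i, j, k). (i, j, k) \<in> R \<and>
      ((i \<in> C1 \<and> j \<in> C2) \<or> (j \<in> C1 \<and> i \<in> C2)) \<and> k \<notin> C1 \<union> C2}"

definition cnt_p :: "('a \<times> 'a \<times> 'a) set \<Rightarrow> 'a set \<Rightarrow> 'a set \<Rightarrow> nat" where
  "cnt_p R C1 C2 = card {(i, j, k). (i, j, k) \<in> R \<and>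
      ((i \<in> C1 \<and> j \<notin> C1 \<union> C2) \<or> (j \<in> C1 \<and> i \<notin> C1 \<union> C2)) \<and> k \<in> C2}"

definition cnt_t :: "('a \<times> 'a \<times> 'a) set \<Rightarrow> 'a set \<Rightarrow> 'a set \<Rightarrow> nat" where
  "cnt_t R C1 C2 = card {(i, j, k). (i, j, k) \<in> R \<and>
      ((i \<in> C1 \<and> j \<in> C2) \<or> (j \<in> C1 \<and> i \<in> C2))}"

datatype escore_fun = Score_w | Score_w_wp | Score_w_t | Score_wmp | Score_wmp_wp | Score_wmp_t

text \<open>Division by zero yields 0 (Isabelle convention).\<close>
fun escore_of :: "escore_fun \<Rightarrow> nat \<Rightarrow> nat \<Rightarrow> nat \<Rightarrow> real" where
  "escore_of Score_w w p t = real w"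
| "escore_of Score_w_wp w p t = real w / (real w + real p)"
| "escore_of Score_w_t w p t = real w / real t"
| "escore_of Score_wmp w p t = real w - real p"
| "escore_of Score_wmp_wp w p t = (real w - real p) / (real w + real p)"
| "escore_of Score_wmp_t w p t = (real w - real p) / real t"

definition e_score :: "escore_fun \<Rightarrow> ('a \<times> 'a \<times> 'a) set \<Rightarrow> 'a ptree \<Rightarrow> 'a ptree \<Rightarrow> real" where
  "e_score es R T1 T2 = escore_of es (cnt_w R (leaves T1) (leaves T2))
        (cnt_p R (leaves T1) (leaves T2)) (cnt_t R (leaves T1) (leaves T2))"

section \<open>Algorithm BPMTR (abstract, with all its nondeterministic choices)\<close>

text \<open>Steps (c)/(d): scan candidates in order, replacing T_best on strict improvement.\<close>
fun greedy_scan :: "('a \<times> 'a \<times> 'a) set \<Rightarrow> 'a ptree \<Rightarrow> 'a ptree list \<Rightarrow> 'a ptree" where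
  "greedy_scan R best [] = best"
| "greedy_scan R best (c # cs) =
     greedy_scan R (if num_consistent R c > num_consistent R best then c else best) cs"

definition merge_outcome :: "('a \<times> 'a \<times> 'a) set \<Rightarrow> 'a ptree \<Rightarrow> 'a ptree \<Rightarrow> 'a ptree \<Rightarrow> bool" where
  "merge_outcome R tx ty tb \<longleftrightarrow>
     (\<exists>ps qs. distinct ps \<and> set ps = set (positions tx) \<and> distinct qs \<and> set qs = set (positions ty) \<and>
        tb = greedy_scan R (greedy_scan R (Node tx ty) (map (swap_x tx ty) ps)) (map (swap_y tx ty) qs))"

definition bpmtr_step :: "escore_fun \<Rightarrow> ('a \<times> 'a \<times> 'a) set \<Rightarrow> 'a ptree set \<Rightarrow> 'a ptree set \<Rightarrow> bool" where
  "bpmtr_step es R Ts Ts' \<longleftrightarrow>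
     (\<exists>tx ty tb. tx \<in> Ts \<and> ty \<in> Ts \<and> tx \<noteq> ty \<and>
        (\<forall>a \<in> Ts. \<forall>b \<in> Ts. a \<noteq> b \<longrightarrow> e_score es R a b \<le> e_score es R tx ty) \<and>
        merge_outcome R tx ty tb \<and> Ts' = insert tb (Ts - {tx, ty}))"

definition bpmtr_output :: "escore_fun \<Rightarrow> ('a \<times> 'a \<times> 'a) set \<Rightarrow> 'a set \<Rightarrow> 'a ptree \<Rightarrow> bool" where
  "bpmtr_output es R S T \<longleftrightarrow> (bpmtr_step es R)\<^sup>*\<^sup>* (Leaf ` S) {T}"

section \<open>A concrete implementation with step counting\<close>

text \<open>Running time is modelled by step-counting functions T_f written in the style of
HOL-Library.Time_Functions (the translation of the book "Functional Data Structures and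
Algorithms"): every call of a user-defined function costs 1 plus the cost of the calls it
makes; list append and length use T_append / T_length from HOL-Library.Time_Functions.
Arithmetic and comparisons on natural numbers and reals, the conversion of a count to a real,
and equality tests between species labels, booleans, or against constructors are primitive
constant-time RAM operations (cost 0 beyond the enclosing call).  Equality between trees or
lists is never used.\<close>

fun mem :: "'a \<Rightarrow> 'a list \<Rightarrow> bool" where
  "mem x [] = False"
| "mem x (y # ys) = (x = y \<or> mem x ys)"

fun leaves_list :: "'a ptree \<Rightarrow> 'a list" where
  "leaves_list (Leaf a) = [a]"
| "leaves_list (Node l r) = leaves_list l @ leaves_list r"

fun leaves_lists :: "'a ptree list \<Rightarrow> 'a list list" where
  "leaves_lists [] = []"
| "leaves_lists (t # ts) = leaves_list t # leaves_lists ts"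

fun find_idx :: "'a \<Rightarrow> 'a list list \<Rightarrow> nat \<Rightarrow> nat" where
  "find_idx x [] i = i"
| "find_idx x (l # ls) i = (if mem x l then i else find_idx x ls (i + 1))"

fun index_triples :: "'a list list \<Rightarrow> ('a \<times> 'a \<times> 'a) list \<Rightarrow> (nat \<times> nat \<times> nat) list" where
  "index_triples ls [] = []"
| "index_triples ls ((x, y, z) # rs) =
     (find_idx x ls 0, find_idx y ls 0, find_idx z ls 0) # index_triples ls rs"

fun count_wpt :: "nat \<Rightarrow> nat \<Rightarrow> (nat \<times> nat \<times> nat) list \<Rightarrow> nat \<times> nat \<times> nat" where
  "count_wpt a b [] = (0, 0, 0)"
| "count_wpt a b ((i, j, k) # xs) =
     (case count_wpt a b xs of (w, p, t) \<Rightarrow>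
       (w + (if ((i = a \<and> j = b) \<or> (j = a \<and> i = b)) \<and> k \<noteq> a \<and> k \<noteq> b then 1 else 0),
        p + (if ((i = a \<and> j \<noteq> a \<and> j \<noteq> b) \<or> (j = a \<and> i \<noteq> a \<and> i \<noteq> b)) \<and> k = b then 1 else 0),
        t + (if (i = a \<and> j = b) \<or> (j = a \<and> i = b) then 1 else 0)))"


fun consider_pair :: "escore_fun \<Rightarrow> (nat \<times> nat \<times> nat) list \<Rightarrow> nat \<Rightarrow> nat
    \<Rightarrow> (nat \<times> nat \<times> real) option \<Rightarrow> (nat \<times> nat \<times> real) option" where
  "consider_pair es ixs a b best =
     (if a = b then best else
       (case count_wpt a b ixs of (w, p, t) \<Rightarrow>
         (case best of
            None \<Rightarrow> Some (a, b, escore_of es w p t)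
          | Some (a', b', s') \<Rightarrow>
              (if escore_of es w p t > s' then Some (a, b, escore_of es w p t) else best))))"


fun scan_b :: "escore_fun \<Rightarrow> (nat \<times> nat \<times> nat) list \<Rightarrow> nat \<Rightarrow> nat list
    \<Rightarrow> (nat \<times> nat \<times> real) option \<Rightarrow> (nat \<times> nat \<times> real) option" where
  "scan_b es ixs a [] best = best"
| "scan_b es ixs a (b # bs) best = scan_b es ixs a bs (consider_pair es ixs a b best)"

fun scan_a :: "escore_fun \<Rightarrow> (nat \<times> nat \<times> nat) list \<Rightarrow> nat list \<Rightarrow> nat list
    \<Rightarrow> (nat \<times> nat \<times> real) option \<Rightarrow> (nat \<times> nat \<times> real) option" where
  "scan_a es ixs [] bs best = best"
| "scan_a es ixs (a # as) bs best = scan_a es ixs as bs (scan_b es ixs a bs best)"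

fun down :: "nat \<Rightarrow> nat list" where
  "down 0 = []"
| "down (Suc k) = k # down k"

fun remove_two :: "nat \<Rightarrow> nat \<Rightarrow> nat \<Rightarrow> 'a ptree list \<Rightarrow> 'a ptree list" where
  "remove_two i a b [] = []"
| "remove_two i a b (t # ts) =
     (if i = a \<or> i = b then remove_two (i + 1) a b ts else t # remove_two (i + 1) a b ts)"

fun lcp_len :: "bool list \<Rightarrow> bool list \<Rightarrow> nat" where
  "lcp_len (a # as) (b # bs) = (if a = b then lcp_len as bs + 1 else 0)"
| "lcp_len as bs = 0"


fun consistent_impl :: "'a ptree \<Rightarrow> 'a \<times> 'a \<times> 'a \<Rightarrow> bool" where
  "consistent_impl t (x, y, z) =
     (case leaf_path t x of None \<Rightarrow> False | Some px \<Rightarrow>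
       (case leaf_path t y of None \<Rightarrow> False | Some py \<Rightarrow>
         (case leaf_path t z of None \<Rightarrow> False | Some pz \<Rightarrow> lcp_len px pz < lcp_len px py)))"

fun count_cons :: "'a ptree \<Rightarrow> ('a \<times> 'a \<times> 'a) list \<Rightarrow> nat" where
  "count_cons t [] = 0"
| "count_cons t (r # rs) = (if consistent_impl t r then count_cons t rs + 1 else count_cons t rs)"


fun scan_x :: "('a \<times> 'a \<times> 'a) list \<Rightarrow> 'a ptree \<Rightarrow> 'a ptree \<Rightarrow> bool list list \<Rightarrow> 'a ptree \<Rightarrow> nat
    \<Rightarrow> 'a ptree \<times> nat" where
  "scan_x rs tx ty [] best c = (best, c)"
| "scan_x rs tx ty (p # ps) best c =
     (let cand = swap_x tx ty p; cc = count_cons cand rs in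
      if cc > c then scan_x rs tx ty ps cand cc else scan_x rs tx ty ps best c)"

fun scan_y :: "('a \<times> 'a \<times> 'a) list \<Rightarrow> 'a ptree \<Rightarrow> 'a ptree \<Rightarrow> bool list list \<Rightarrow> 'a ptree \<Rightarrow> nat
    \<Rightarrow> 'a ptree \<times> nat" where
  "scan_y rs tx ty [] best c = (best, c)"
| "scan_y rs tx ty (q # qs) best c =
     (let cand = swap_y tx ty q; cc = count_cons cand rs in
      if cc > c then scan_y rs tx ty qs cand cc else scan_y rs tx ty qs best c)"

fun merge_impl :: "('a \<times> 'a \<times> 'a) list \<Rightarrow> 'a ptree \<Rightarrow> 'a ptree \<Rightarrow> 'a ptree" where
  "merge_impl rs tx ty =
     (case scan_x rs tx ty (positions tx) (Node tx ty) (count_cons (Node tx ty) rs) of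
        (b1, c1) \<Rightarrow> (case scan_y rs tx ty (positions ty) b1 c1 of (b2, c2) \<Rightarrow> b2))"

fun pick :: "'a ptree list \<Rightarrow> 'a ptree" where
  "pick (t # ts) = t"
| "pick [] = Leaf undefined"

text \<open>Main loop; the fuel argument (the number of species) bounds the number of rounds.\<close>
fun bpmtr_loop :: "nat \<Rightarrow> escore_fun \<Rightarrow> ('a \<times> 'a \<times> 'a) list \<Rightarrow> 'a ptree list \<Rightarrow> 'a ptree" where
  "bpmtr_loop 0 es rs ts = pick ts"
| "bpmtr_loop (Suc f) es rs ts =
     (case scan_a es (index_triples (leaves_lists ts) rs) (down (length ts)) (down (length ts)) None of
        None \<Rightarrow> pick ts
      | Some (a, b, s) \<Rightarrow>
          bpmtr_loop f es rs (merge_impl rs (ts ! a) (ts ! b) # remove_two 0 a b ts))"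

fun leaf_trees :: "'a list \<Rightarrow> 'a ptree list" where
  "leaf_trees [] = []"
| "leaf_trees (x # xs) = Leaf x # leaf_trees xs"

fun bpmtr_impl :: "escore_fun \<Rightarrow> ('a \<times> 'a \<times> 'a) list \<Rightarrow> 'a list \<Rightarrow> 'a ptree" where
  "bpmtr_impl es rs ss = bpmtr_loop (length ss) es rs (leaf_trees ss)"


fun T_mem :: "'a \<Rightarrow> 'a list \<Rightarrow> nat" where
  "T_mem x [] = 1"
| "T_mem x (y # ys) = T_mem x ys + 1"

fun T_leaves_list :: "'a ptree \<Rightarrow> nat" where
  "T_leaves_list (Leaf a) = 1"
| "T_leaves_list (Node l r) =
     T_leaves_list l + T_leaves_list r + T_append (leaves_list l) (leaves_list r) + 1"

fun T_leaves_lists :: "'a ptree list \<Rightarrow> nat" where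
  "T_leaves_lists [] = 1"
| "T_leaves_lists (t # ts) = T_leaves_list t + T_leaves_lists ts + 1"

fun T_find_idx :: "'a \<Rightarrow> 'a list list \<Rightarrow> nat \<Rightarrow> nat" where
  "T_find_idx x [] i = 1"
| "T_find_idx x (l # ls) i = T_mem x l + (if mem x l then 0 else T_find_idx x ls (i + 1)) + 1"

fun T_index_triples :: "'a list list \<Rightarrow> ('a \<times> 'a \<times> 'a) list \<Rightarrow> nat" where
  "T_index_triples ls [] = 1"
| "T_index_triples ls ((x, y, z) # rs) =
     T_find_idx x ls 0 + T_find_idx y ls 0 + T_find_idx z ls 0 + T_index_triples ls rs + 1"

fun T_count_wpt :: "nat \<Rightarrow> nat \<Rightarrow> (nat \<times> nat \<times> nat) list \<Rightarrow> nat" where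
  "T_count_wpt a b [] = 1"
| "T_count_wpt a b (x # xs) = T_count_wpt a b xs + 1"

fun T_escore_of :: "escore_fun \<Rightarrow> nat \<Rightarrow> nat \<Rightarrow> nat \<Rightarrow> nat" where
  "T_escore_of es w p t = 1"

fun T_consider_pair :: "escore_fun \<Rightarrow> (nat \<times> nat \<times> nat) list \<Rightarrow> nat \<Rightarrow> nat
    \<Rightarrow> (nat \<times> nat \<times> real) option \<Rightarrow> nat" where
  "T_consider_pair es ixs a b best =
     (if a = b then 0 else
       (case count_wpt a b ixs of (w, p, t) \<Rightarrow>
          T_count_wpt a b ixs + 2 * T_escore_of es w p t)) + 1"

fun T_scan_b :: "escore_fun \<Rightarrow> (nat \<times> nat \<times> nat) list \<Rightarrow> nat \<Rightarrow> nat list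
    \<Rightarrow> (nat \<times> nat \<times> real) option \<Rightarrow> nat" where
  "T_scan_b es ixs a [] best = 1"
| "T_scan_b es ixs a (b # bs) best =
     T_consider_pair es ixs a b best + T_scan_b es ixs a bs (consider_pair es ixs a b best) + 1"

fun T_scan_a :: "escore_fun \<Rightarrow> (nat \<times> nat \<times> nat) list \<Rightarrow> nat list \<Rightarrow> nat list
    \<Rightarrow> (nat \<times> nat \<times> real) option \<Rightarrow> nat" where
  "T_scan_a es ixs [] bs best = 1"
| "T_scan_a es ixs (a # as) bs best =
     T_scan_b es ixs a bs best + T_scan_a es ixs as bs (scan_b es ixs a bs best) + 1"

fun T_down :: "nat \<Rightarrow> nat" where
  "T_down 0 = 1"
| "T_down (Suc k) = T_down k + 1"

fun T_remove_two :: "nat \<Rightarrow> nat \<Rightarrow> nat \<Rightarrow> 'a ptree list \<Rightarrow> nat" where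
  "T_remove_two i a b [] = 1"
| "T_remove_two i a b (t # ts) = T_remove_two (i + 1) a b ts + 1"

fun T_lcp_len :: "bool list \<Rightarrow> bool list \<Rightarrow> nat" where
  "T_lcp_len (a # as) (b # bs) = (if a = b then T_lcp_len as bs else 0) + 1"
| "T_lcp_len as bs = 1"

fun T_leaf_path :: "'a ptree \<Rightarrow> 'a \<Rightarrow> nat" where
  "T_leaf_path (Leaf b) a = 1"
| "T_leaf_path (Node l r) a =
     T_leaf_path l a + (case leaf_path l a of None \<Rightarrow> T_leaf_path r a | Some p \<Rightarrow> 0) + 1"

fun T_consistent_impl :: "'a ptree \<Rightarrow> 'a \<times> 'a \<times> 'a \<Rightarrow> nat" where
  "T_consistent_impl t (x, y, z) =
     T_leaf_path t x +
     (case leaf_path t x of None \<Rightarrow> 0 | Some px \<Rightarrow>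
        T_leaf_path t y +
        (case leaf_path t y of None \<Rightarrow> 0 | Some py \<Rightarrow>
           T_leaf_path t z +
           (case leaf_path t z of None \<Rightarrow> 0 | Some pz \<Rightarrow> T_lcp_len px pz + T_lcp_len px py))) + 1"

fun T_count_cons :: "'a ptree \<Rightarrow> ('a \<times> 'a \<times> 'a) list \<Rightarrow> nat" where
  "T_count_cons t [] = 1"
| "T_count_cons t (r # rs) = T_consistent_impl t r + T_count_cons t rs + 1"

fun T_cons_all :: "bool \<Rightarrow> bool list list \<Rightarrow> nat" where
  "T_cons_all b [] = 1"
| "T_cons_all b (p # ps) = T_cons_all b ps + 1"

fun T_positions :: "'a ptree \<Rightarrow> nat" where
  "T_positions (Leaf a) = 1"
| "T_positions (Node l r) =
     T_positions l + T_cons_all False (positions l) + T_positions r + T_cons_all True (positions r)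
     + T_append (cons_all False (positions l)) (cons_all True (positions r)) + 1"

fun T_subtree_at :: "'a ptree \<Rightarrow> bool list \<Rightarrow> nat" where
  "T_subtree_at t [] = 1"
| "T_subtree_at (Node l r) (b # p) = (if b then T_subtree_at r p else T_subtree_at l p) + 1"
| "T_subtree_at (Leaf a) (b # p) = 1"

fun T_replace_at :: "'a ptree \<Rightarrow> bool list \<Rightarrow> 'a ptree \<Rightarrow> nat" where
  "T_replace_at t [] s = 1"
| "T_replace_at (Node l r) (b # p) s = (if b then T_replace_at r p s else T_replace_at l p s) + 1"
| "T_replace_at (Leaf a) (b # p) s = 1"

fun T_swap_x :: "'a ptree \<Rightarrow> 'a ptree \<Rightarrow> bool list \<Rightarrow> nat" where
  "T_swap_x tx ty p = T_replace_at tx p ty + T_subtree_at tx p + 1"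

fun T_swap_y :: "'a ptree \<Rightarrow> 'a ptree \<Rightarrow> bool list \<Rightarrow> nat" where
  "T_swap_y tx ty q = T_subtree_at ty q + T_replace_at ty q tx + 1"

fun T_scan_x :: "('a \<times> 'a \<times> 'a) list \<Rightarrow> 'a ptree \<Rightarrow> 'a ptree \<Rightarrow> bool list list \<Rightarrow> 'a ptree \<Rightarrow> nat
    \<Rightarrow> nat" where
  "T_scan_x rs tx ty [] best c = 1"
| "T_scan_x rs tx ty (p # ps) best c =
     T_swap_x tx ty p + T_count_cons (swap_x tx ty p) rs +
     (if count_cons (swap_x tx ty p) rs > c
      then T_scan_x rs tx ty ps (swap_x tx ty p) (count_cons (swap_x tx ty p) rs)
      else T_scan_x rs tx ty ps best c) + 1"

fun T_scan_y :: "('a \<times> 'a \<times> 'a) list \<Rightarrow> 'a ptree \<Rightarrow> 'a ptree \<Rightarrow> bool list list \<Rightarrow> 'a ptree \<Rightarrow> nat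
    \<Rightarrow> nat" where
  "T_scan_y rs tx ty [] best c = 1"
| "T_scan_y rs tx ty (q # qs) best c =
     T_swap_y tx ty q + T_count_cons (swap_y tx ty q) rs +
     (if count_cons (swap_y tx ty q) rs > c
      then T_scan_y rs tx ty qs (swap_y tx ty q) (count_cons (swap_y tx ty q) rs)
      else T_scan_y rs tx ty qs best c) + 1"

fun T_merge_impl :: "('a \<times> 'a \<times> 'a) list \<Rightarrow> 'a ptree \<Rightarrow> 'a ptree \<Rightarrow> nat" where
  "T_merge_impl rs tx ty =
     T_positions tx + T_count_cons (Node tx ty) rs +
     T_scan_x rs tx ty (positions tx) (Node tx ty) (count_cons (Node tx ty) rs) +
     (case scan_x rs tx ty (positions tx) (Node tx ty) (count_cons (Node tx ty) rs) of
        (b1, c1) \<Rightarrow> T_positions ty + T_scan_y rs tx ty (positions ty) b1 c1) + 1"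

fun T_pick :: "'a ptree list \<Rightarrow> nat" where
  "T_pick ts = 1"

fun T_bpmtr_loop :: "nat \<Rightarrow> escore_fun \<Rightarrow> ('a \<times> 'a \<times> 'a) list \<Rightarrow> 'a ptree list \<Rightarrow> nat" where
  "T_bpmtr_loop 0 es rs ts = T_pick ts + 1"
| "T_bpmtr_loop (Suc f) es rs ts =
     T_leaves_lists ts + T_index_triples (leaves_lists ts) rs +
     2 * (T_length ts + T_down (length ts)) +
     T_scan_a es (index_triples (leaves_lists ts) rs) (down (length ts)) (down (length ts)) None +
     (case scan_a es (index_triples (leaves_lists ts) rs) (down (length ts)) (down (length ts)) None of
        None \<Rightarrow> T_pick ts
      | Some (a, b, s) \<Rightarrow>
          T_nth ts a + T_nth ts b + T_merge_impl rs (ts ! a) (ts ! b) + T_remove_two 0 a b ts +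
          T_bpmtr_loop f es rs (merge_impl rs (ts ! a) (ts ! b) # remove_two 0 a b ts)) + 1"

fun T_leaf_trees :: "'a list \<Rightarrow> nat" where
  "T_leaf_trees [] = 1"
| "T_leaf_trees (x # xs) = T_leaf_trees xs + 1"

fun T_bpmtr_impl :: "escore_fun \<Rightarrow> ('a \<times> 'a \<times> 'a) list \<Rightarrow> 'a list \<Rightarrow> nat" where
  "T_bpmtr_impl es rs ss = T_length ss + T_leaf_trees ss + T_bpmtr_loop (length ss) es rs (leaf_trees ss) + 1"

end

theory Submission
  imports Defs "HOL-Library.Multiset"
begin


lemma leaves_set: "leaves t = set (leaves_list t)"
  by (induction t) auto

lemma leaf_path_None: "leaf_path t x = None \<longleftrightarrow> x \<notin> leaves t"
  by (induction t) (auto split: option.splits)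

lemma cons_all_map: "cons_all b ps = map ((#) b) ps"
  by (induction ps) auto

lemma distinct_positions: "distinct (positions t)"
  by (induction t) (auto simp: cons_all_map distinct_map)

lemma lcp_len: "lcp_len a b = length (lcp a b)"
  by (induction a b rule: lcp.induct) auto

lemma lcp_prefix: "prefix (lcp a b) a"
  by (induction a b rule: lcp.induct) auto

lemma prefixes_strict: "prefix u w \<Longrightarrow> prefix v w \<Longrightarrow> strict_prefix u v \<longleftrightarrow> length u < length v"
proof -
  assume a: "prefix u w" "prefix v w"
  show ?thesis
  proof
    assume "strict_prefix u v" then show "length u < length v" by (rule prefix_length_less)
  next
    assume l: "length u < length v"
    from prefix_same_cases[OF a] have "prefix u v \<or> prefix v u" .
    moreover have "\<not> prefix v u" using l prefix_length_le by fastforce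
    ultimately have "prefix u v" by blast
    moreover have "u \<noteq> v" using l by auto
    ultimately show "strict_prefix u v" by auto
  qed
qed

lemma consistent_impl_eq: "consistent_impl t r = consistent t r"
proof -
  obtain x y z where r: "r = (x,y,z)" by (cases r) auto
  show ?thesis
  proof (cases "x \<in> leaves t \<and> y \<in> leaves t \<and> z \<in> leaves t")
    case True
    then obtain px py pz where "leaf_path t x = Some px" "leaf_path t y = Some py" "leaf_path t z = Some pz"
      by (metis leaf_path_None not_None_eq)
    then show ?thesis using True
      by (simp add: r consistent_def lca_def lcp_len prefixes_strict[OF lcp_prefix lcp_prefix])
  next
    case False
    then show ?thesis
      by (auto simp: r consistent_def leaf_path_None[symmetric] split: option.splits)
  qed
qed

lemma count_cons_filter: "count_cons t rs = length (filter (consistent t) rs)"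
  by (induction rs) (auto simp: consistent_impl_eq)

lemma count_cons_num: "distinct rs \<Longrightarrow> count_cons t rs = num_consistent (set rs) t"
proof -
  assume d: "distinct rs"
  have "{x \<in> set rs. consistent t x} = {x. consistent t x} \<inter> set rs" by auto
  then show ?thesis using d by (simp add: count_cons_filter num_consistent_def distinct_length_filter)
qed

lemma scan_x_greedy: "distinct rs \<Longrightarrow> c = num_consistent (set rs) best \<Longrightarrow>
  scan_x rs tx ty ps best c = (greedy_scan (set rs) best (map (swap_x tx ty) ps),
     num_consistent (set rs) (greedy_scan (set rs) best (map (swap_x tx ty) ps)))"
proof (induction ps arbitrary: best c)
  case Nil then show ?case by simp
next
  case (Cons p ps)
  show ?case using Cons.prems
    by (simp only: scan_x.simps Let_def count_cons_num list.map greedy_scan.simps)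
      (auto intro!: Cons.IH)
qed

lemma scan_y_greedy: "distinct rs \<Longrightarrow> c = num_consistent (set rs) best \<Longrightarrow>
  scan_y rs tx ty ps best c = (greedy_scan (set rs) best (map (swap_y tx ty) ps),
     num_consistent (set rs) (greedy_scan (set rs) best (map (swap_y tx ty) ps)))"
proof (induction ps arbitrary: best c)
  case Nil then show ?case by simp
next
  case (Cons p ps)
  show ?case using Cons.prems
    by (simp only: scan_y.simps Let_def count_cons_num list.map greedy_scan.simps)
      (auto intro!: Cons.IH)
qed

lemma merge_impl_greedy: "distinct rs \<Longrightarrow> merge_impl rs tx ty =
  greedy_scan (set rs) (greedy_scan (set rs) (Node tx ty) (map (swap_x tx ty) (positions tx))) (map (swap_y tx ty) (positions ty))"
  by (simp add: scan_x_greedy scan_y_greedy count_cons_num)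

lemma merge_outcome_impl: "distinct rs \<Longrightarrow> merge_outcome (set rs) tx ty (merge_impl rs tx ty)"
  unfolding merge_outcome_def merge_impl_greedy
  using distinct_positions by blast

lemma greedy_scan_in: "greedy_scan R best cs \<in> insert best (set cs)"
proof (induction cs arbitrary: best)
  case Nil then show ?case by simp
next
  case (Cons c cs)
  show ?case using Cons.IH[of "if num_consistent R c > num_consistent R best then c else best"]
    by (auto split: if_splits)
qed

lemma leaves_swap:
  "p \<in> set (positions t) \<Longrightarrow> mset (leaves_list (replace_at t p s)) + mset (leaves_list (subtree_at t p))
     = mset (leaves_list t) + mset (leaves_list s)"
proof (induction t arbitrary: p)
  case (Leaf a) then show ?case by auto
next
  case (Node l r)
  from Node.prems consider "p = []" | q where "p = False # q" "q \<in> set (positions l)"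
     | q where "p = True # q" "q \<in> set (positions r)"
    by (auto simp: cons_all_map)
  then show ?case
  proof cases
    case 1 then show ?thesis by simp
  next
    case 2 then show ?thesis using Node.IH(1)[of q] by (simp add: algebra_simps)
  next
    case 3 then show ?thesis using Node.IH(2)[of q] by (simp add: algebra_simps)
  qed
qed

lemma merge_impl_leaves: "distinct rs \<Longrightarrow>
  mset (leaves_list (merge_impl rs tx ty)) = mset (leaves_list tx) + mset (leaves_list ty)"
proof -
  assume d: "distinct rs"
  let ?g1 = "greedy_scan (set rs) (Node tx ty) (map (swap_x tx ty) (positions tx))"
  have g1: "?g1 \<in> insert (Node tx ty) (set (map (swap_x tx ty) (positions tx)))" by (rule greedy_scan_in)
  have "mset (leaves_list ?g1) = mset (leaves_list tx) + mset (leaves_list ty)"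
    using g1 leaves_swap[of _ tx ty] by (auto simp: algebra_simps)
  moreover have "merge_impl rs tx ty \<in> insert ?g1 (set (map (swap_y tx ty) (positions ty)))"
    unfolding merge_impl_greedy[OF d] by (rule greedy_scan_in)
  ultimately show ?thesis
    using leaves_swap[of _ ty tx] by (auto simp: algebra_simps)
qed



definition sc :: "escore_fun \<Rightarrow> (nat \<times> nat \<times> nat) list \<Rightarrow> nat \<Rightarrow> nat \<Rightarrow> real" where
  "sc es ixs a b = (case count_wpt a b ixs of (w,p,t) \<Rightarrow> escore_of es w p t)"

definition Good :: "escore_fun \<Rightarrow> (nat \<times> nat \<times> nat) list \<Rightarrow> nat \<Rightarrow> (nat \<times> nat \<times> real) option \<Rightarrow> bool" where
  "Good es ixs k best = (\<forall>a b s. best = Some (a,b,s) \<longrightarrow> a \<noteq> b \<and> a < k \<and> b < k \<and> s = sc es ixs a b)"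

definition ge :: "(nat \<times> nat \<times> real) option \<Rightarrow> (nat \<times> nat \<times> real) option \<Rightarrow> bool" where
  "ge r t = (\<forall>x. t = Some x \<longrightarrow> (\<exists>y. r = Some y \<and> snd (snd x) \<le> snd (snd y)))"

lemma ge_refl: "ge r r" by (auto simp: ge_def)
lemma ge_trans: "ge r t \<Longrightarrow> ge t u \<Longrightarrow> ge r u" by (fastforce simp: ge_def)

lemma consider_pair_props:
  assumes "Good es ixs k best" "a < k" "b < k"
  shows "Good es ixs k (consider_pair es ixs a b best) \<and> ge (consider_pair es ixs a b best) best \<and>
     (a \<noteq> b \<longrightarrow> ge (consider_pair es ixs a b best) (Some (a, b, sc es ixs a b)))"
proof (cases "a = b")
  case True then show ?thesis using assms by (simp add: ge_refl)
next
  case False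
  obtain w p t where wpt: "count_wpt a b ixs = (w,p,t)" by (cases "count_wpt a b ixs") auto
  have s: "sc es ixs a b = escore_of es w p t" by (simp add: sc_def wpt)
  show ?thesis
  proof (cases best)
    case None then show ?thesis using assms False by (simp add: wpt s Good_def ge_def)
  next
    case (Some x)
    obtain a' b' s' where x: "x = (a',b',s')" by (cases x) auto
    have g: "a' \<noteq> b' \<and> a' < k \<and> b' < k \<and> s' = sc es ixs a' b'" using assms(1) by (simp add: Good_def Some x)
    show ?thesis
    proof (cases "escore_of es w p t > s'")
      case True
      have cp: "consider_pair es ixs a b best = Some (a, b, sc es ixs a b)"
        using True False by (simp add: wpt s Some x)
      have le: "s' \<le> sc es ixs a b" using True s by simp
      show ?thesis unfolding cp using assms(2,3) le \<open>a \<noteq> b\<close> by (simp add: Good_def ge_def Some x)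
    next
      case False
      have cp: "consider_pair es ixs a b best = best"
        using False \<open>a \<noteq> b\<close> by (simp add: wpt s Some x)
      have le: "sc es ixs a b \<le> s'" using False s by simp
      show ?thesis unfolding cp using assms(1) ge_refl[of best] le by (simp add: ge_def Some x)
    qed
  qed
qed

lemma scan_b_props:
  assumes "Good es ixs k best" "a < k" "set bs \<subseteq> {..<k}"
  shows "Good es ixs k (scan_b es ixs a bs best) \<and> ge (scan_b es ixs a bs best) best \<and>
     (\<forall>b \<in> set bs. a \<noteq> b \<longrightarrow> ge (scan_b es ixs a bs best) (Some (a, b, sc es ixs a b)))"
  using assms
proof (induction bs arbitrary: best)
  case Nil then show ?case by (simp add: ge_refl)
next
  case (Cons b bs)
  let ?c = "consider_pair es ixs a b best"
  have c: "Good es ixs k ?c" "ge ?c best" "a \<noteq> b \<longrightarrow> ge ?c (Some (a, b, sc es ixs a b))"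
    using consider_pair_props[OF Cons.prems(1,2), of b] Cons.prems(3) by auto
  have ih: "Good es ixs k (scan_b es ixs a bs ?c) \<and> ge (scan_b es ixs a bs ?c) ?c \<and>
     (\<forall>b \<in> set bs. a \<noteq> b \<longrightarrow> ge (scan_b es ixs a bs ?c) (Some (a, b, sc es ixs a b)))"
    using Cons.IH[OF c(1) Cons.prems(2)] Cons.prems(3) by auto
  show ?case
  proof (intro conjI)
    have e: "scan_b es ixs a (b # bs) best = scan_b es ixs a bs ?c" by simp
    show "Good es ixs k (scan_b es ixs a (b # bs) best)" using ih e by simp
    show "ge (scan_b es ixs a (b # bs) best) best" unfolding e using ih c(2) ge_trans by blast
    show "\<forall>b'\<in>set (b # bs). a \<noteq> b' \<longrightarrow> ge (scan_b es ixs a (b # bs) best) (Some (a, b', sc es ixs a b'))"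
      unfolding e using ih c(3) ge_trans by auto
  qed
qed

lemma scan_a_props:
  assumes "Good es ixs k best" "set as \<subseteq> {..<k}" "set bs \<subseteq> {..<k}"
  shows "Good es ixs k (scan_a es ixs as bs best) \<and> ge (scan_a es ixs as bs best) best \<and>
     (\<forall>a \<in> set as. \<forall>b \<in> set bs. a \<noteq> b \<longrightarrow> ge (scan_a es ixs as bs best) (Some (a, b, sc es ixs a b)))"
  using assms
proof (induction as arbitrary: best)
  case Nil then show ?case by (simp add: ge_refl)
next
  case (Cons a as)
  let ?c = "scan_b es ixs a bs best"
  have c: "Good es ixs k ?c" "ge ?c best" "\<forall>b \<in> set bs. a \<noteq> b \<longrightarrow> ge ?c (Some (a, b, sc es ixs a b))"
  proof -
    have "a < k" using Cons.prems(2) by simp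
    from scan_b_props[OF Cons.prems(1) this Cons.prems(3)] show "Good es ixs k ?c" "ge ?c best" "\<forall>b \<in> set bs. a \<noteq> b \<longrightarrow> ge ?c (Some (a, b, sc es ixs a b))"
      by blast+
  qed
  have ih: "Good es ixs k (scan_a es ixs as bs ?c) \<and> ge (scan_a es ixs as bs ?c) ?c \<and>
     (\<forall>a \<in> set as. \<forall>b \<in> set bs. a \<noteq> b \<longrightarrow> ge (scan_a es ixs as bs ?c) (Some (a, b, sc es ixs a b)))"
  proof -
    have "set as \<subseteq> {..<k}" using Cons.prems(2) by simp
    from Cons.IH[OF c(1) this Cons.prems(3)] show ?thesis .
  qed
  have e: "scan_a es ixs (a # as) bs best = scan_a es ixs as bs ?c" by simp
  show ?case
  proof (intro conjI)
    show "Good es ixs k (scan_a es ixs (a # as) bs best)" using ih e by simp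
    show "ge (scan_a es ixs (a # as) bs best) best" unfolding e using ge_trans[OF _ c(2)] ih by blast
    show "\<forall>a'\<in>set (a # as). \<forall>b\<in>set bs. a' \<noteq> b \<longrightarrow> ge (scan_a es ixs (a # as) bs best) (Some (a', b, sc es ixs a' b))"
      unfolding e
    proof (intro ballI impI)
      fix a' b assume a': "a' \<in> set (a # as)" and b: "b \<in> set bs" and ne: "a' \<noteq> b"
      show "ge (scan_a es ixs as bs ?c) (Some (a', b, sc es ixs a' b))"
      proof (cases "a' = a")
        case True
        then have "ge ?c (Some (a', b, sc es ixs a' b))" using c(3) b ne by blast
        then show ?thesis using ge_trans[of _ ?c] ih by blast
      next
        case False
        then have "a' \<in> set as" using a' by simp
        then show ?thesis using ih b ne by blast
      qed
    qed
  qed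
qed

lemma set_down: "set (down k) = {..<k}"
  by (induction k) (simp_all add: lessThan_Suc)

lemma length_down: "length (down k) = k"
  by (induction k) auto

lemma select_None: "scan_a es ixs (down k) (down k) None = None \<Longrightarrow> k \<le> 1"
proof (rule ccontr)
  assume r: "scan_a es ixs (down k) (down k) None = None" and "\<not> k \<le> 1"
  then have "0 < k" "1 < k" by auto
  with scan_a_props[of es ixs k None "down k" "down k"]
  have "ge (scan_a es ixs (down k) (down k) None) (Some (0, 1, sc es ixs 0 1))"
    by (simp add: Good_def set_down)
  with r show False by (simp add: ge_def)
qed

lemma select_Some: "scan_a es ixs (down k) (down k) None = Some (a, b, s) \<Longrightarrow>
   a \<noteq> b \<and> a < k \<and> b < k \<and> s = sc es ixs a b \<and> (\<forall>a' < k. \<forall>b' < k. a' \<noteq> b' \<longrightarrow> sc es ixs a' b' \<le> s)"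
proof -
  assume r: "scan_a es ixs (down k) (down k) None = Some (a, b, s)"
  have p: "Good es ixs k (scan_a es ixs (down k) (down k) None) \<and>
     (\<forall>a \<in> set (down k). \<forall>b \<in> set (down k). a \<noteq> b \<longrightarrow> ge (scan_a es ixs (down k) (down k) None) (Some (a, b, sc es ixs a b)))"
    using scan_a_props[of es ixs k None "down k" "down k"] by (simp add: Good_def set_down)
  have g: "a \<noteq> b \<and> a < k \<and> b < k \<and> s = sc es ixs a b" using p unfolding r Good_def by blast
  have "sc es ixs a' b' \<le> s" if "a' < k" "b' < k" "a' \<noteq> b'" for a' b'
  proof -
    have "ge (Some (a, b, s)) (Some (a', b', sc es ixs a' b'))" using p that r by (simp add: set_down)
    then show ?thesis by (simp add: ge_def)
  qed
  then show ?thesis using g by blast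
qed



definition INV :: "'a set \<Rightarrow> 'a ptree list \<Rightarrow> bool" where
 "INV S ts \<longleftrightarrow> distinct ts \<and> (\<forall>t\<in>set ts. distinct (leaves_list t)) \<and>
    (\<forall>t1\<in>set ts. \<forall>t2\<in>set ts. t1 \<noteq> t2 \<longrightarrow> leaves t1 \<inter> leaves t2 = {}) \<and>
    (\<Union>t\<in>set ts. leaves t) = S"

lemma mem_iff: "mem x l \<longleftrightarrow> x \<in> set l"
  by (induction l) auto

lemma find_idx_gen: "i < length ls \<Longrightarrow> x \<in> set (ls!i) \<Longrightarrow> (\<forall>j<i. x \<notin> set (ls!j)) \<Longrightarrow> find_idx x ls j0 = j0 + i"
proof (induction ls arbitrary: i j0)
  case Nil then show ?case by simp
next
  case (Cons l ls)
  show ?case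
  proof (cases i)
    case 0 then show ?thesis using Cons.prems by (simp add: mem_iff)
  next
    case (Suc i')
    have "x \<notin> set l" using Cons.prems(3) Suc by force
    moreover have "find_idx x ls (j0 + 1) = j0 + 1 + i'"
      using Cons.IH[of i' "j0 + 1"] Cons.prems Suc by force
    ultimately show ?thesis using Suc by (simp add: mem_iff)
  qed
qed

lemma leaves_lists_map: "leaves_lists ts = map leaves_list ts"
  by (induction ts) auto

lemma find_idx_ts: "INV S ts \<Longrightarrow> i < length ts \<Longrightarrow> x \<in> leaves (ts!i) \<Longrightarrow> find_idx x (leaves_lists ts) 0 = i"
proof -
  assume inv: "INV S ts" and i: "i < length ts" and x: "x \<in> leaves (ts!i)"
  have "\<forall>j<i. x \<notin> set (map leaves_list ts ! j)"
  proof (intro allI impI)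
    fix j assume "j < i"
    then have j: "j < length ts" "j \<noteq> i" using i by auto
    then have "ts!i \<noteq> ts!j" using inv i unfolding INV_def by (simp add: nth_eq_iff_index_eq)
    then have "leaves (ts!i) \<inter> leaves (ts!j) = {}" using inv i j unfolding INV_def by (meson nth_mem)
    then show "x \<notin> set (map leaves_list ts ! j)" using x j by (auto simp: leaves_set)
  qed
  then show ?thesis using find_idx_gen[of i "map leaves_list ts" x 0] i x
    by (simp add: leaves_lists_map leaves_set)
qed

lemma idx_exists: "INV S ts \<Longrightarrow> x \<in> S \<Longrightarrow> \<exists>i<length ts. x \<in> leaves (ts!i)"
proof -
  assume "INV S ts" "x \<in> S"
  then obtain t where "t \<in> set ts" "x \<in> leaves t" unfolding INV_def by blast
  then obtain i where "i < length ts" "ts ! i = t" by (meson in_set_conv_nth)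
  then show ?thesis using \<open>x \<in> leaves t\<close> by blast
qed

lemma find_idx_iff: "INV S ts \<Longrightarrow> x \<in> S \<Longrightarrow> a < length ts \<Longrightarrow>
   (find_idx x (leaves_lists ts) 0 = a) = (x \<in> leaves (ts!a))"
proof -
  assume a: "INV S ts" "x \<in> S" "a < length ts"
  obtain i where i: "i < length ts" "x \<in> leaves (ts!i)" using idx_exists[OF a(1,2)] by blast
  have "find_idx x (leaves_lists ts) 0 = i" using find_idx_ts[OF a(1) i] .
  moreover have "x \<in> leaves (ts!a) \<longleftrightarrow> a = i"
  proof
    assume "x \<in> leaves (ts!a)"
    then have "find_idx x (leaves_lists ts) 0 = a" using find_idx_ts[OF a(1) a(3)] by simp
    then show "a = i" using find_idx_ts[OF a(1) i] by simp
  qed (use i in simp)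
  ultimately show ?thesis by auto
qed

lemma count_wpt_filter: "count_wpt a b xs =
  (length (filter (\<lambda>(i,j,k). ((i = a \<and> j = b) \<or> (j = a \<and> i = b)) \<and> k \<noteq> a \<and> k \<noteq> b) xs),
   length (filter (\<lambda>(i,j,k). ((i = a \<and> j \<noteq> a \<and> j \<noteq> b) \<or> (j = a \<and> i \<noteq> a \<and> i \<noteq> b)) \<and> k = b) xs),
   length (filter (\<lambda>(i,j,k). (i = a \<and> j = b) \<or> (j = a \<and> i = b)) xs))"
proof (induction xs)
  case Nil then show ?case by simp
next
  case (Cons x xs)
  obtain i j k where x: "x = (i,j,k)" by (cases x) auto
  have lfc: "\<And>P. length (filter P (x # xs)) = length (filter P xs) + (if P x then 1 else 0)" by simp
  show ?case unfolding x count_wpt.simps Cons.IH lfc[unfolded x] by (simp only: prod.case)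
qed

lemma index_triples_map: "index_triples ls rs = map (\<lambda>(x,y,z). (find_idx x ls 0, find_idx y ls 0, find_idx z ls 0)) rs"
  by (induction ls rs rule: index_triples.induct) auto

lemma length_filter_map_card: "distinct rs \<Longrightarrow> (\<And>r. r \<in> set rs \<Longrightarrow> P (g r) = Q r) \<Longrightarrow>
   length (filter P (map g rs)) = card {r. r \<in> set rs \<and> Q r}"
proof -
  assume d: "distinct rs" and pq: "\<And>r. r \<in> set rs \<Longrightarrow> P (g r) = Q r"
  have "length (filter P (map g rs)) = length (filter (P \<circ> g) rs)" by (simp add: filter_map)
  also have "\<dots> = length (filter Q rs)" using pq by (metis comp_apply filter_cong)
  also have "\<dots> = card {r. r \<in> set rs \<and> Q r}" using d
    by (simp add: distinct_length_filter Int_commute Collect_conj_eq Collect_mem_eq)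
  finally show ?thesis .
qed

lemma triplet_mem: "triplet_set_on S R \<Longrightarrow> (i,j,k) \<in> R \<Longrightarrow> i \<in> S \<and> j \<in> S \<and> k \<in> S"
  unfolding triplet_set_on_def by blast

lemma count_wpt_cnt:
  assumes inv: "INV S ts" and tr: "triplet_set_on S (set rs)" and d: "distinct rs"
    and a: "a < length ts" and b: "b < length ts"
  shows "count_wpt a b (index_triples (leaves_lists ts) rs) =
    (cnt_w (set rs) (leaves (ts!a)) (leaves (ts!b)), cnt_p (set rs) (leaves (ts!a)) (leaves (ts!b)),
     cnt_t (set rs) (leaves (ts!a)) (leaves (ts!b)))"
proof -
  define f where "f x = find_idx x (leaves_lists ts) 0" for x
  define C1 where "C1 = leaves (ts!a)"
  define C2 where "C2 = leaves (ts!b)"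
  have fa: "f x = a \<longleftrightarrow> x \<in> C1" if "x \<in> S" for x
    using find_idx_iff[OF inv that a] unfolding f_def C1_def .
  have fb: "f x = b \<longleftrightarrow> x \<in> C2" if "x \<in> S" for x
    using find_idx_iff[OF inv that b] unfolding f_def C2_def .
  have ixs: "index_triples (leaves_lists ts) rs = map (\<lambda>(x,y,z). (f x, f y, f z)) rs"
    unfolding index_triples_map f_def ..
  have w: "length (filter (\<lambda>(i,j,k). ((i = a \<and> j = b) \<or> (j = a \<and> i = b)) \<and> k \<noteq> a \<and> k \<noteq> b)
       (map (\<lambda>(x,y,z). (f x, f y, f z)) rs)) = cnt_w (set rs) C1 C2"
  proof -
    have "length (filter (\<lambda>(i,j,k). ((i = a \<and> j = b) \<or> (j = a \<and> i = b)) \<and> k \<noteq> a \<and> k \<noteq> b)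
       (map (\<lambda>(x,y,z). (f x, f y, f z)) rs)) =
       card {r. r \<in> set rs \<and> (case r of (i,j,k) \<Rightarrow> ((i \<in> C1 \<and> j \<in> C2) \<or> (j \<in> C1 \<and> i \<in> C2)) \<and> k \<notin> C1 \<union> C2)}"
    proof (rule length_filter_map_card[OF d])
      fix r assume r: "r \<in> set rs"
      obtain i j k where rr: "r = (i,j,k)" by (cases r) auto
      have S: "i \<in> S" "j \<in> S" "k \<in> S" using triplet_mem[OF tr r[unfolded rr]] by auto
      show "(case (case r of (x,y,z) \<Rightarrow> (f x, f y, f z)) of (i,j,k) \<Rightarrow> ((i = a \<and> j = b) \<or> (j = a \<and> i = b)) \<and> k \<noteq> a \<and> k \<noteq> b)
         = (case r of (i,j,k) \<Rightarrow> ((i \<in> C1 \<and> j \<in> C2) \<or> (j \<in> C1 \<and> i \<in> C2)) \<and> k \<notin> C1 \<union> C2)"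
        unfolding rr prod.case using fa[OF S(1)] fa[OF S(2)] fa[OF S(3)] fb[OF S(1)] fb[OF S(2)] fb[OF S(3)]
        by blast
    qed
    also have "{r. r \<in> set rs \<and> (case r of (i,j,k) \<Rightarrow> ((i \<in> C1 \<and> j \<in> C2) \<or> (j \<in> C1 \<and> i \<in> C2)) \<and> k \<notin> C1 \<union> C2)}
      = {(i, j, k). (i, j, k) \<in> set rs \<and> ((i \<in> C1 \<and> j \<in> C2) \<or> (j \<in> C1 \<and> i \<in> C2)) \<and> k \<notin> C1 \<union> C2}"
      by (auto split: prod.splits)
    finally show ?thesis unfolding cnt_w_def .
  qed
  have p: "length (filter (\<lambda>(i,j,k). ((i = a \<and> j \<noteq> a \<and> j \<noteq> b) \<or> (j = a \<and> i \<noteq> a \<and> i \<noteq> b)) \<and> k = b)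
       (map (\<lambda>(x,y,z). (f x, f y, f z)) rs)) = cnt_p (set rs) C1 C2"
  proof -
    have "length (filter (\<lambda>(i,j,k). ((i = a \<and> j \<noteq> a \<and> j \<noteq> b) \<or> (j = a \<and> i \<noteq> a \<and> i \<noteq> b)) \<and> k = b)
       (map (\<lambda>(x,y,z). (f x, f y, f z)) rs)) =
       card {r. r \<in> set rs \<and> (case r of (i,j,k) \<Rightarrow> ((i \<in> C1 \<and> j \<notin> C1 \<union> C2) \<or> (j \<in> C1 \<and> i \<notin> C1 \<union> C2)) \<and> k \<in> C2)}"
    proof (rule length_filter_map_card[OF d])
      fix r assume r: "r \<in> set rs"
      obtain i j k where rr: "r = (i,j,k)" by (cases r) auto
      have S: "i \<in> S" "j \<in> S" "k \<in> S" using triplet_mem[OF tr r[unfolded rr]] by auto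
      show "(case (case r of (x,y,z) \<Rightarrow> (f x, f y, f z)) of (i,j,k) \<Rightarrow> ((i = a \<and> j \<noteq> a \<and> j \<noteq> b) \<or> (j = a \<and> i \<noteq> a \<and> i \<noteq> b)) \<and> k = b)
         = (case r of (i,j,k) \<Rightarrow> ((i \<in> C1 \<and> j \<notin> C1 \<union> C2) \<or> (j \<in> C1 \<and> i \<notin> C1 \<union> C2)) \<and> k \<in> C2)"
        unfolding rr prod.case using fa[OF S(1)] fa[OF S(2)] fa[OF S(3)] fb[OF S(1)] fb[OF S(2)] fb[OF S(3)]
        by blast
    qed
    also have "{r. r \<in> set rs \<and> (case r of (i,j,k) \<Rightarrow> ((i \<in> C1 \<and> j \<notin> C1 \<union> C2) \<or> (j \<in> C1 \<and> i \<notin> C1 \<union> C2)) \<and> k \<in> C2)}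
      = {(i, j, k). (i, j, k) \<in> set rs \<and> ((i \<in> C1 \<and> j \<notin> C1 \<union> C2) \<or> (j \<in> C1 \<and> i \<notin> C1 \<union> C2)) \<and> k \<in> C2}"
      by (auto split: prod.splits)
    finally show ?thesis unfolding cnt_p_def .
  qed
  have t: "length (filter (\<lambda>(i,j,k). (i = a \<and> j = b) \<or> (j = a \<and> i = b))
       (map (\<lambda>(x,y,z). (f x, f y, f z)) rs)) = cnt_t (set rs) C1 C2"
  proof -
    have "length (filter (\<lambda>(i,j,k). (i = a \<and> j = b) \<or> (j = a \<and> i = b))
       (map (\<lambda>(x,y,z). (f x, f y, f z)) rs)) =
       card {r. r \<in> set rs \<and> (case r of (i,j,k) \<Rightarrow> (i \<in> C1 \<and> j \<in> C2) \<or> (j \<in> C1 \<and> i \<in> C2))}"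
    proof (rule length_filter_map_card[OF d])
      fix r assume r: "r \<in> set rs"
      obtain i j k where rr: "r = (i,j,k)" by (cases r) auto
      have S: "i \<in> S" "j \<in> S" "k \<in> S" using triplet_mem[OF tr r[unfolded rr]] by auto
      show "(case (case r of (x,y,z) \<Rightarrow> (f x, f y, f z)) of (i,j,k) \<Rightarrow> (i = a \<and> j = b) \<or> (j = a \<and> i = b))
         = (case r of (i,j,k) \<Rightarrow> (i \<in> C1 \<and> j \<in> C2) \<or> (j \<in> C1 \<and> i \<in> C2))"
        unfolding rr prod.case using fa[OF S(1)] fa[OF S(2)] fb[OF S(1)] fb[OF S(2)]
        by blast
    qed
    also have "{r. r \<in> set rs \<and> (case r of (i,j,k) \<Rightarrow> (i \<in> C1 \<and> j \<in> C2) \<or> (j \<in> C1 \<and> i \<in> C2))}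
      = {(i, j, k). (i, j, k) \<in> set rs \<and> ((i \<in> C1 \<and> j \<in> C2) \<or> (j \<in> C1 \<and> i \<in> C2))}"
      by (auto split: prod.splits)
    finally show ?thesis unfolding cnt_t_def .
  qed
  show ?thesis unfolding ixs count_wpt_filter w p t C1_def C2_def ..
qed

lemma sc_e_score:
  assumes "INV S ts" "triplet_set_on S (set rs)" "distinct rs" "a < length ts" "b < length ts"
  shows "sc es (index_triples (leaves_lists ts) rs) a b = e_score es (set rs) (ts!a) (ts!b)"
  unfolding sc_def count_wpt_cnt[OF assms] e_score_def by simp

lemma remove_two_nths: "remove_two i a b ts = nths ts {j. i + j \<noteq> a \<and> i + j \<noteq> b}"
proof (induction ts arbitrary: i)
  case Nil then show ?case by simp
next
  case (Cons t ts)
  have e: "{j. Suc j \<in> {j. i + j \<noteq> a \<and> i + j \<noteq> b}} = {j. i + 1 + j \<noteq> a \<and> i + 1 + j \<noteq> b}" by auto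
  show ?case unfolding nths_Cons e Cons.IH[symmetric] by simp
qed

lemma leaves_nonempty: "leaves t \<noteq> {}"
  by (induction t) auto

lemma step_list:
  assumes inv: "INV S ts" and d: "distinct rs" and ab: "a \<noteq> b" "a < length ts" "b < length ts"
  defines "tb \<equiv> merge_impl rs (ts!a) (ts!b)"
  shows "INV S (tb # remove_two 0 a b ts) \<and>
    set (tb # remove_two 0 a b ts) = insert tb (set ts - {ts!a, ts!b}) \<and>
    length (tb # remove_two 0 a b ts) = length ts - 1"
proof -
  let ?R = "remove_two 0 a b ts"
  have R: "?R = nths ts {j. j \<noteq> a \<and> j \<noteq> b}" by (simp add: remove_two_nths)
  have dts: "distinct ts" using inv by (simp add: INV_def)
  have setR: "set ?R = set ts - {ts!a, ts!b}"
    unfolding R set_nths using dts ab by (auto simp: nth_eq_iff_index_eq in_set_conv_nth)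
  have "{i. i < length ts \<and> i \<in> {j. j \<noteq> a \<and> j \<noteq> b}} = {..<length ts} - {a, b}" by auto
  then have lenR: "length ?R = length ts - 2" unfolding R length_nths using ab by simp
  have dR: "distinct ?R" unfolding R using dts by simp
  have ta: "ts!a \<in> set ts" "ts!b \<in> set ts" using ab by auto
  have neq: "ts!a \<noteq> ts!b" using dts ab by (simp add: nth_eq_iff_index_eq)
  have disj_ab: "leaves (ts!a) \<inter> leaves (ts!b) = {}" using inv ta neq by (simp add: INV_def)
  have ml: "mset (leaves_list tb) = mset (leaves_list (ts!a) @ leaves_list (ts!b))"
    unfolding tb_def using merge_impl_leaves[OF d] by simp
  have ltb: "leaves tb = leaves (ts!a) \<union> leaves (ts!b)"
    using mset_eq_setD[OF ml] by (simp add: leaves_set)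
  have dtb: "distinct (leaves_list tb)"
    using mset_eq_imp_distinct_iff[OF ml] inv ta disj_ab by (simp add: INV_def leaves_set)
  have disjR: "leaves t \<inter> leaves tb = {}" if "t \<in> set ?R" for t
  proof -
    have "t \<in> set ts" "t \<noteq> ts!a" "t \<noteq> ts!b" using that setR by auto
    then show ?thesis using inv ta unfolding ltb INV_def by blast
  qed
  have tbR: "tb \<notin> set ?R"
  proof
    assume "tb \<in> set ?R"
    from disjR[OF this] show False using leaves_nonempty[of tb] by simp
  qed
  have inv2: "INV S (tb # ?R)"
    unfolding INV_def
  proof (intro conjI)
    show "distinct (tb # ?R)" using dR tbR by simp
    show "\<forall>t\<in>set (tb # ?R). distinct (leaves_list t)" using dtb inv setR by (auto simp: INV_def)
    show "\<forall>t1\<in>set (tb # ?R). \<forall>t2\<in>set (tb # ?R). t1 \<noteq> t2 \<longrightarrow> leaves t1 \<inter> leaves t2 = {}"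
    proof (intro ballI impI)
      fix t1 t2 assume t1: "t1 \<in> set (tb # ?R)" and t2: "t2 \<in> set (tb # ?R)" and ne: "t1 \<noteq> t2"
      show "leaves t1 \<inter> leaves t2 = {}"
      proof (cases "t1 = tb")
        case True then show ?thesis using t2 ne disjR by auto
      next
        case False
        then have t1R: "t1 \<in> set ?R" using t1 by simp
        show ?thesis
        proof (cases "t2 = tb")
          case True then show ?thesis using disjR[OF t1R] by simp
        next
          case False
          then have "t2 \<in> set ?R" using t2 by simp
          then show ?thesis using t1R ne inv setR unfolding INV_def by auto
        qed
      qed
    qed
    show "(\<Union>t\<in>set (tb # ?R). leaves t) = S"
    proof -
      have "set ts = insert (ts!a) (insert (ts!b) (set ?R))" using setR ta by auto
      then have "(\<Union>t\<in>set ts. leaves t) = leaves tb \<union> (\<Union>t\<in>set ?R. leaves t)"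
        unfolding ltb by auto
      then show ?thesis using inv by (simp add: INV_def)
    qed
  qed
  show ?thesis using inv2 setR lenR ab by simp
qed

lemma single_tree: "INV S ts \<Longrightarrow> S \<noteq> {} \<Longrightarrow> length ts \<le> 1 \<Longrightarrow> set ts = {pick ts}"
proof -
  assume inv: "INV S ts" and S: "S \<noteq> {}" and l: "length ts \<le> 1"
  have "ts \<noteq> []" using inv S by (auto simp: INV_def)
  then obtain t where "ts = [t]" using l by (cases ts) auto
  then show ?thesis by simp
qed

lemma loop_correct:
  assumes "INV S ts" "S \<noteq> {}" "length ts \<le> Suc f" "triplet_set_on S (set rs)" "distinct rs"
  shows "(bpmtr_step es (set rs))\<^sup>*\<^sup>* (set ts) {bpmtr_loop f es rs ts}"
  using assms(1,3)
proof (induction f arbitrary: ts)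
  case 0
  then show ?case using single_tree[OF 0(1) assms(2)] by simp
next
  case (Suc f)
  let ?ixs = "index_triples (leaves_lists ts) rs"
  show ?case
  proof (cases "scan_a es ?ixs (down (length ts)) (down (length ts)) None")
    case None
    then have "length ts \<le> 1" by (rule select_None)
    then show ?thesis using single_tree[OF Suc.prems(1) assms(2)] None by simp
  next
    case (Some x)
    obtain a b s where x: "x = (a,b,s)" by (cases x) auto
    note sel = select_Some[OF Some[unfolded x]]
    define tb where "tb = merge_impl rs (ts!a) (ts!b)"
    have ab: "a \<noteq> b" "a < length ts" "b < length ts" using sel by auto
    note sl = step_list[OF Suc.prems(1) assms(5) ab, folded tb_def]
    have loop: "bpmtr_loop (Suc f) es rs ts = bpmtr_loop f es rs (tb # remove_two 0 a b ts)"
      using Some x by (simp add: tb_def)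
    have step: "bpmtr_step es (set rs) (set ts) (set (tb # remove_two 0 a b ts))"
      unfolding bpmtr_step_def
    proof (intro exI conjI)
      show "ts!a \<in> set ts" "ts!b \<in> set ts" using ab by auto
      show "ts!a \<noteq> ts!b" using ab Suc.prems(1) by (simp add: INV_def nth_eq_iff_index_eq)
      show "merge_outcome (set rs) (ts ! a) (ts ! b) tb" unfolding tb_def by (rule merge_outcome_impl[OF assms(5)])
      show "set (tb # remove_two 0 a b ts) = insert tb (set ts - {ts ! a, ts ! b})" using sl by blast
      show "\<forall>A\<in>set ts. \<forall>B\<in>set ts. A \<noteq> B \<longrightarrow> e_score es (set rs) A B \<le> e_score es (set rs) (ts ! a) (ts ! b)"
      proof (intro ballI impI)
        fix A B assume A: "A \<in> set ts" and B: "B \<in> set ts" and ne: "A \<noteq> B"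
        obtain a' where a': "a' < length ts" "ts!a' = A" using A by (meson in_set_conv_nth)
        obtain b' where b': "b' < length ts" "ts!b' = B" using B by (meson in_set_conv_nth)
        have "a' \<noteq> b'" using a' b' ne by auto
        then have "sc es ?ixs a' b' \<le> s" using sel a' b' by blast
        moreover have "s = sc es ?ixs a b" using sel by blast
        ultimately show "e_score es (set rs) A B \<le> e_score es (set rs) (ts ! a) (ts ! b)"
          using sc_e_score[OF Suc.prems(1) assms(4,5) a'(1) b'(1)] sc_e_score[OF Suc.prems(1) assms(4,5) ab(2,3)] a' b'
          by simp
      qed
    qed
    have ih: "(bpmtr_step es (set rs))\<^sup>*\<^sup>* (set (tb # remove_two 0 a b ts)) {bpmtr_loop f es rs (tb # remove_two 0 a b ts)}"
    proof (rule Suc.IH)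
      show "INV S (tb # remove_two 0 a b ts)" using sl by blast
      have "length (tb # remove_two 0 a b ts) = length ts - 1" using sl by blast
      then show "length (tb # remove_two 0 a b ts) \<le> Suc f" using Suc.prems(2) by linarith
    qed
    show ?thesis unfolding loop using converse_rtranclp_into_rtranclp[OF step ih] .
  qed
qed

lemma INV_init: "distinct ss \<Longrightarrow> INV (set ss) (leaf_trees ss)"
proof -
  assume d: "distinct ss"
  have lt: "leaf_trees ss = map Leaf ss" by (induction ss) auto
  show ?thesis unfolding INV_def lt using d by (auto simp: distinct_map inj_on_def)
qed

lemma bpmtr_correct:
  assumes "distinct ss" "distinct rs" "triplet_set_on (set ss) (set rs)" "set ss \<noteq> {}"
  shows "bpmtr_output es (set rs) (set ss) (bpmtr_impl es rs ss)"
proof -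
  have lt: "leaf_trees ss = map Leaf ss" by (induction ss) auto
  have "(bpmtr_step es (set rs))\<^sup>*\<^sup>* (set (leaf_trees ss)) {bpmtr_loop (length ss) es rs (leaf_trees ss)}"
    by (rule loop_correct[OF INV_init[OF assms(1)] assms(4) _ assms(3,2)]) (simp add: lt)
  then show ?thesis unfolding bpmtr_output_def by (simp add: lt)
qed



fun sz :: "'a ptree \<Rightarrow> nat" where
  "sz (Leaf a) = 1"
| "sz (Node l r) = sz l + sz r + 1"

lemma sz_pos: "1 \<le> sz t" by (induction t) auto
lemma sz_pos': "Suc 0 \<le> sz t" by (induction t) auto

lemma sz_leaves: "sz t + 1 = 2 * length (leaves_list t)"
  by (induction t) auto

lemma T_leaf_path_le: "T_leaf_path t a \<le> sz t"
proof (induction t)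
  case (Leaf b) then show ?case by simp
next
  case (Node l r) then show ?case by (simp split: option.splits)
qed

lemma leaf_path_len: "leaf_path t a = Some p \<Longrightarrow> length p < sz t"
proof (induction t arbitrary: p)
  case (Leaf b) then show ?case by (simp split: if_splits)
next
  case (Node l r)
  show ?case
  proof (cases "leaf_path l a")
    case None
    then obtain q where "leaf_path r a = Some q" "p = True # q" using Node.prems by (auto split: option.splits)
    then show ?thesis using Node.IH(2) by fastforce
  next
    case (Some q)
    then have "p = False # q" using Node.prems by simp
    then show ?thesis using Node.IH(1) Some by fastforce
  qed
qed

lemma T_lcp_len_le: "T_lcp_len xs ys \<le> length xs + 1"
  by (induction xs ys rule: T_lcp_len.induct) auto

lemma T_consistent_impl_le: "T_consistent_impl t r \<le> 5 * sz t + 1"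
proof -
  obtain x y z where r: "r = (x,y,z)" by (cases r) auto
  have lx: "T_leaf_path t x \<le> sz t" "T_leaf_path t y \<le> sz t" "T_leaf_path t z \<le> sz t"
    by (rule T_leaf_path_le)+
  have lc: "T_lcp_len px q \<le> sz t" if "leaf_path t x = Some px" for px q
    using T_lcp_len_le[of px q] leaf_path_len[OF that] by linarith
  show ?thesis
  proof (cases "leaf_path t x")
    case None then show ?thesis using lx unfolding r by simp
  next
    case (Some px)
    note sx = Some
    show ?thesis
    proof (cases "leaf_path t y")
      case None then show ?thesis using lx sx unfolding r by simp
    next
      case (Some py)
      note sy = Some
      show ?thesis
      proof (cases "leaf_path t z")
        case None then show ?thesis using lx sx sy unfolding r by simp
      next
        case (Some pz)
        then show ?thesis using lx sx sy lc[OF sx, of pz] lc[OF sx, of py] unfolding r by simp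
      qed
    qed
  qed
qed

lemma T_count_cons_le: "T_count_cons t rs \<le> length rs * (5 * sz t + 2) + 1"
proof (induction rs)
  case Nil then show ?case by simp
next
  case (Cons r rs) then show ?case using T_consistent_impl_le[of t r] by simp
qed

lemma length_positions: "length (positions t) = sz t"
  by (induction t) (auto simp: cons_all_map)

lemma T_cons_all: "T_cons_all b ps = length ps + 1"
  by (induction ps) auto

lemma T_positions_le: "T_positions t \<le> 2 * sz t ^ 2"
proof (induction t)
  case (Leaf a) then show ?case by simp
next
  case (Node l r)
  have "T_positions (Node l r) = T_positions l + T_positions r + 2 * sz l + sz r + 4"
    by (simp add: T_cons_all T_append length_positions cons_all_map)
  also have "\<dots> \<le> 2 * sz l ^ 2 + 2 * sz r ^ 2 + 2 * sz l + sz r + 4" using Node.IH by simp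
  also have "\<dots> \<le> 2 * (sz l + sz r + 1) ^ 2"
  proof -
    have "1 \<le> sz l" "1 \<le> sz r" by (rule sz_pos)+
    then have "1 \<le> sz l * sz r" by simp
    then show ?thesis by (simp add: power2_eq_square algebra_simps)
  qed
  finally show ?case by simp
qed

lemma T_subtree_at_le: "T_subtree_at t p \<le> sz t"
  by (induction t p rule: T_subtree_at.induct) (auto simp: sz_pos')

lemma T_replace_at_le: "T_replace_at t p s \<le> sz t"
  by (induction t p s rule: T_replace_at.induct) (auto simp: sz_pos')

lemma sz_subtree_at: "sz (subtree_at t p) \<le> sz t"
  by (induction t p rule: subtree_at.induct) auto

lemma sz_replace_at: "sz (replace_at t p s) \<le> sz t + sz s"
  by (induction t p s rule: replace_at.induct) auto

lemma T_leaves_list_le: "T_leaves_list t \<le> 2 * sz t ^ 2"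
proof (induction t)
  case (Leaf a) then show ?case by simp
next
  case (Node l r)
  have ll: "length (leaves_list l) \<le> sz l" using sz_leaves[of l] by linarith
  have "T_leaves_list (Node l r) \<le> 2 * sz l ^ 2 + 2 * sz r ^ 2 + sz l + 2"
    using Node.IH ll by (simp add: T_append)
  also have "\<dots> \<le> 2 * (sz l + sz r + 1) ^ 2"
  proof -
    have "1 \<le> sz l" "1 \<le> sz r" by (rule sz_pos)+
    then have "1 \<le> sz l * sz r" by simp
    then show ?thesis by (simp add: power2_eq_square algebra_simps)
  qed
  finally show ?case by simp
qed

lemma T_mem_eq: "T_mem x l = length l + 1"
  by (induction l) auto

lemma T_find_idx_le: "T_find_idx x ls i \<le> sum_list (map length ls) + 2 * length ls + 1"
  by (induction x ls i rule: T_find_idx.induct) (auto simp: T_mem_eq)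

lemma T_index_triples_le: "T_index_triples ls rs \<le> length rs * (3 * (sum_list (map length ls) + 2 * length ls + 1) + 1) + 1"
proof (induction ls rs rule: T_index_triples.induct)
  case (1 ls) then show ?case by simp
next
  case (2 ls x y z rs)
  then show ?case using T_find_idx_le[of x ls 0] T_find_idx_le[of y ls 0] T_find_idx_le[of z ls 0] by simp
qed

lemma length_index_triples: "length (index_triples ls rs) = length rs"
  by (induction ls rs rule: index_triples.induct) auto

lemma T_count_wpt_eq: "T_count_wpt a b xs = length xs + 1"
  by (induction xs) auto

lemma T_consider_pair_le: "T_consider_pair es ixs a b best \<le> length ixs + 4"
  by (cases "count_wpt a b ixs") (simp add: T_count_wpt_eq)

lemma T_scan_b_le: "T_scan_b es ixs a bs best \<le> length bs * (length ixs + 5) + 1"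
proof (induction bs arbitrary: best)
  case Nil then show ?case by simp
next
  case (Cons b bs)
  have e: "T_scan_b es ixs a (b # bs) best = T_consider_pair es ixs a b best + T_scan_b es ixs a bs (consider_pair es ixs a b best) + 1"
    by (simp only: T_scan_b.simps)
  show ?case unfolding e using T_consider_pair_le[of es ixs a b best] Cons.IH[of "consider_pair es ixs a b best"]
    by (simp del: T_consider_pair.simps)
qed

lemma T_scan_a_le: "T_scan_a es ixs as bs best \<le> length as * (length bs * (length ixs + 5) + 2) + 1"
proof (induction as arbitrary: best)
  case Nil then show ?case by simp
next
  case (Cons a as)
  have e: "T_scan_a es ixs (a # as) bs best = T_scan_b es ixs a bs best + T_scan_a es ixs as bs (scan_b es ixs a bs best) + 1"
    by (simp only: T_scan_a.simps)
  define X where "X = length bs * (length ixs + 5)"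
  have "T_scan_b es ixs a bs best \<le> X + 1" using T_scan_b_le[of es ixs a bs best] unfolding X_def .
  moreover have "T_scan_a es ixs as bs (scan_b es ixs a bs best) \<le> length as * (X + 2) + 1"
    using Cons.IH[of "scan_b es ixs a bs best"] unfolding X_def .
  ultimately have "T_scan_a es ixs (a # as) bs best \<le> length (a # as) * (X + 2) + 1" unfolding e by simp
  then show ?case unfolding X_def .
qed

lemma T_down_eq: "T_down k = k + 1"
  by (induction k) auto

lemma T_remove_two_eq: "T_remove_two i a b ts = length ts + 1"
  by (induction i a b ts rule: T_remove_two.induct) auto

lemma T_scan_x_le: "(\<And>p. T_swap_x tx ty p + T_count_cons (swap_x tx ty p) rs + 1 \<le> X) \<Longrightarrow>
   T_scan_x rs tx ty ps best c \<le> length ps * X + 1"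
proof (induction ps arbitrary: best c)
  case Nil then show ?case by simp
next
  case (Cons p ps)
  have "T_scan_x rs tx ty ps (swap_x tx ty p) (count_cons (swap_x tx ty p) rs) \<le> length ps * X + 1"
    "T_scan_x rs tx ty ps best c \<le> length ps * X + 1" using Cons by blast+
  then show ?case using Cons.prems[of p] by simp
qed

lemma T_scan_y_le: "(\<And>q. T_swap_y tx ty q + T_count_cons (swap_y tx ty q) rs + 1 \<le> X) \<Longrightarrow>
   T_scan_y rs tx ty qs best c \<le> length qs * X + 1"
proof (induction qs arbitrary: best c)
  case Nil then show ?case by simp
next
  case (Cons q qs)
  have "T_scan_y rs tx ty qs (swap_y tx ty q) (count_cons (swap_y tx ty q) rs) \<le> length qs * X + 1"
    "T_scan_y rs tx ty qs best c \<le> length qs * X + 1" using Cons by blast+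
  then show ?case using Cons.prems[of q] by simp
qed

lemma swap_x_cost: "T_swap_x tx ty p + T_count_cons (swap_x tx ty p) rs + 1
   \<le> 2 * sz tx + 2 + length rs * (5 * (2 * sz tx + sz ty + 1) + 2) + 1"
proof -
  have a: "T_swap_x tx ty p \<le> 2 * sz tx + 1" using T_replace_at_le[of tx p ty] T_subtree_at_le[of tx p] by simp
  have b: "sz (swap_x tx ty p) \<le> 2 * sz tx + sz ty + 1"
    using sz_replace_at[of tx p ty] sz_subtree_at[of tx p] by simp
  have c: "T_count_cons (swap_x tx ty p) rs \<le> length rs * (5 * (2 * sz tx + sz ty + 1) + 2) + 1"
    using T_count_cons_le[of "swap_x tx ty p" rs] b
    by (meson add_le_mono1 le_trans mult_le_mono2 mult_le_mono2)
  show ?thesis using a c by simp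
qed

lemma swap_y_cost: "T_swap_y tx ty q + T_count_cons (swap_y tx ty q) rs + 1
   \<le> 2 * sz ty + 2 + length rs * (5 * (2 * sz ty + sz tx + 1) + 2) + 1"
proof -
  have a: "T_swap_y tx ty q \<le> 2 * sz ty + 1" using T_replace_at_le[of ty q tx] T_subtree_at_le[of ty q] by simp
  have b: "sz (swap_y tx ty q) \<le> 2 * sz ty + sz tx + 1"
    using sz_replace_at[of ty q tx] sz_subtree_at[of ty q] by simp
  have c: "T_count_cons (swap_y tx ty q) rs \<le> length rs * (5 * (2 * sz ty + sz tx + 1) + 2) + 1"
    using T_count_cons_le[of "swap_y tx ty q" rs] b
    by (meson add_le_mono1 le_trans mult_le_mono2 mult_le_mono2)
  show ?thesis using a c by simp
qed

lemma T_merge_le: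
  assumes hx: "sz tx \<le> B" and hy: "sz ty \<le> B"
  shows "T_merge_impl rs tx ty \<le> 4 * B^2 + length rs * (10 * B + 7) + 2 * (B * (2 * B + 3 + length rs * (15 * B + 7))) + 4"
proof -
  let ?m = "length rs"
  define X where "X = 2 * B + 3 + ?m * (15 * B + 7)"
  have p1: "T_positions tx \<le> 2 * B^2" using T_positions_le[of tx] hx by (meson le_trans mult_le_mono2 power_mono zero_le)
  have p2: "T_positions ty \<le> 2 * B^2" using T_positions_le[of ty] hy by (meson le_trans mult_le_mono2 power_mono zero_le)
  have c0: "T_count_cons (Node tx ty) rs \<le> ?m * (10 * B + 7) + 1"
  proof -
    have "5 * sz (Node tx ty) + 2 \<le> 10 * B + 7" using hx hy by simp
    then show ?thesis using T_count_cons_le[of "Node tx ty" rs] by (meson add_le_mono1 le_trans mult_le_mono2)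
  qed
  have sx: "T_swap_x tx ty p + T_count_cons (swap_x tx ty p) rs + 1 \<le> X" for p
  proof -
    have "5 * (2 * sz tx + sz ty + 1) + 2 \<le> 15 * B + 7" using hx hy by simp
    then have "?m * (5 * (2 * sz tx + sz ty + 1) + 2) \<le> ?m * (15 * B + 7)" by (rule mult_le_mono2)
    then show ?thesis using swap_x_cost[of tx ty p rs] hx unfolding X_def by linarith
  qed
  have sy: "T_swap_y tx ty q + T_count_cons (swap_y tx ty q) rs + 1 \<le> X" for q
  proof -
    have "5 * (2 * sz ty + sz tx + 1) + 2 \<le> 15 * B + 7" using hx hy by simp
    then have "?m * (5 * (2 * sz ty + sz tx + 1) + 2) \<le> ?m * (15 * B + 7)" by (rule mult_le_mono2)
    then show ?thesis using swap_y_cost[of tx ty q rs] hx hy unfolding X_def by linarith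
  qed
  have scx: "T_scan_x rs tx ty (positions tx) b c \<le> B * X + 1" for b c
  proof -
    have "T_scan_x rs tx ty (positions tx) b c \<le> length (positions tx) * X + 1" by (rule T_scan_x_le[OF sx])
    moreover have "length (positions tx) * X \<le> B * X" using hx by (simp add: length_positions)
    ultimately show ?thesis by linarith
  qed
  have scy: "T_scan_y rs tx ty (positions ty) b c \<le> B * X + 1" for b c
  proof -
    have "T_scan_y rs tx ty (positions ty) b c \<le> length (positions ty) * X + 1" by (rule T_scan_y_le[OF sy])
    moreover have "length (positions ty) * X \<le> B * X" using hy by (simp add: length_positions)
    ultimately show ?thesis by linarith
  qed
  obtain b1 c1 where bc: "scan_x rs tx ty (positions tx) (Node tx ty) (count_cons (Node tx ty) rs) = (b1, c1)"
    by (cases "scan_x rs tx ty (positions tx) (Node tx ty) (count_cons (Node tx ty) rs)") auto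
  have "T_merge_impl rs tx ty = T_positions tx + T_count_cons (Node tx ty) rs +
     T_scan_x rs tx ty (positions tx) (Node tx ty) (count_cons (Node tx ty) rs) +
     (T_positions ty + T_scan_y rs tx ty (positions ty) b1 c1) + 1"
    by (simp add: bc)
  also have "\<dots> \<le> 2 * B^2 + (?m * (10 * B + 7) + 1) + (B * X + 1) + (2 * B^2 + (B * X + 1)) + 1"
    using p1 p2 c0 scx[of "Node tx ty" "count_cons (Node tx ty) rs"] scy[of b1 c1] by linarith
  finally show ?thesis unfolding X_def by simp
qed

lemma INV_nl_sum: "INV S ts \<Longrightarrow> sum_list (map (\<lambda>t. length (leaves_list t)) ts) = card S"
proof -
  assume inv: "INV S ts"
  have dts: "distinct ts" and dl: "\<forall>t\<in>set ts. distinct (leaves_list t)"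
    and dj: "\<forall>t1\<in>set ts. \<forall>t2\<in>set ts. t1 \<noteq> t2 \<longrightarrow> leaves t1 \<inter> leaves t2 = {}"
    and un: "(\<Union>t\<in>set ts. leaves t) = S" using inv by (auto simp: INV_def)
  have inj: "inj_on leaves_list (set ts)"
  proof (rule inj_onI)
    fix t1 t2 assume t: "t1 \<in> set ts" "t2 \<in> set ts" "leaves_list t1 = leaves_list t2"
    show "t1 = t2"
    proof (rule ccontr)
      assume "t1 \<noteq> t2"
      then have "leaves t1 \<inter> leaves t2 = {}" using dj t by blast
      moreover have "leaves t1 = leaves t2" using t(3) by (simp add: leaves_set)
      ultimately show False using leaves_nonempty[of t1] by simp
    qed
  qed
  have dc: "distinct (concat (map leaves_list ts))"
  proof (rule distinct_concat)
    show "distinct (map leaves_list ts)" using dts inj by (simp add: distinct_map)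
    show "\<And>ys. ys \<in> set (map leaves_list ts) \<Longrightarrow> distinct ys" using dl by auto
    fix ys zs assume y: "ys \<in> set (map leaves_list ts)" and z: "zs \<in> set (map leaves_list ts)" and ne: "ys \<noteq> zs"
    obtain t1 where t1: "t1 \<in> set ts" "ys = leaves_list t1" using y by auto
    obtain t2 where t2: "t2 \<in> set ts" "zs = leaves_list t2" using z by auto
    have "t1 \<noteq> t2" using ne t1 t2 by auto
    then show "set ys \<inter> set zs = {}" using dj t1 t2 by (simp add: leaves_set)
  qed
  have sc: "set (concat (map leaves_list ts)) = S" using un by (auto simp: leaves_set)
  have "sum_list (map (\<lambda>t. length (leaves_list t)) ts) = length (concat (map leaves_list ts))"
    by (simp add: length_concat comp_def)
  also have "\<dots> = card S" using distinct_card[OF dc] sc by simp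
  finally show ?thesis .
qed

lemma INV_sz_sum: "INV S ts \<Longrightarrow> sum_list (map sz ts) \<le> 2 * card S"
proof -
  assume inv: "INV S ts"
  have "sum_list (map sz ts) \<le> sum_list (map (\<lambda>t. 2 * length (leaves_list t)) ts)"
  proof (rule sum_list_mono)
    fix t show "sz t \<le> 2 * length (leaves_list t)" using sz_leaves[of t] by linarith
  qed
  also have "\<dots> = 2 * sum_list (map (\<lambda>t. length (leaves_list t)) ts)"
    by (simp add: sum_list_const_mult)
  finally show ?thesis using INV_nl_sum[OF inv] by simp
qed

lemma INV_sz_le: "INV S ts \<Longrightarrow> t \<in> set ts \<Longrightarrow> sz t \<le> 2 * card S"
  using member_le_sum_list[of "sz t" "map sz ts"] INV_sz_sum[of S ts] by simp

lemma INV_len_le: "INV S ts \<Longrightarrow> length ts \<le> 2 * card S"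
proof -
  assume inv: "INV S ts"
  have "length ts = sum_list (map (\<lambda>t. 1::nat) ts)" by (simp add: sum_list_triv)
  also have "\<dots> \<le> sum_list (map sz ts)" by (rule sum_list_mono) (rule sz_pos)
  finally show ?thesis using INV_sz_sum[OF inv] by simp
qed

lemma T_leaves_lists_eq: "T_leaves_lists ts = sum_list (map T_leaves_list ts) + length ts + 1"
  by (induction ts) auto

lemma T_leaves_lists_le: "INV S ts \<Longrightarrow> T_leaves_lists ts \<le> 2 * (2 * card S)^2 + 2 * card S + 1"
proof -
  assume inv: "INV S ts"
  let ?B = "2 * card S"
  have "sum_list (map T_leaves_list ts) \<le> sum_list (map (\<lambda>t. 2 * ?B * sz t) ts)"
  proof (rule sum_list_mono)
    fix t assume t: "t \<in> set ts"
    have "sz t ^ 2 \<le> ?B * sz t" using INV_sz_le[OF inv t] by (simp add: power2_eq_square)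
    then show "T_leaves_list t \<le> 2 * ?B * sz t" using T_leaves_list_le[of t] by simp
  qed
  also have "\<dots> = 2 * ?B * sum_list (map sz ts)" by (simp add: sum_list_const_mult)
  also have "\<dots> \<le> 2 * ?B * ?B" using INV_sz_sum[OF inv] by simp
  finally show ?thesis using INV_len_le[OF inv] unfolding T_leaves_lists_eq by (simp add: power2_eq_square)
qed

lemma T_index_triples_ts: "INV S ts \<Longrightarrow> T_index_triples (leaves_lists ts) rs \<le> length rs * (9 * (2 * card S) + 4) + 1"
proof -
  assume inv: "INV S ts"
  have "sum_list (map length (leaves_lists ts)) = card S"
    using INV_nl_sum[OF inv] by (simp add: leaves_lists_map comp_def)
  moreover have "length (leaves_lists ts) \<le> 2 * card S" using INV_len_le[OF inv] by (simp add: leaves_lists_map)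
  ultimately have "3 * (sum_list (map length (leaves_lists ts)) + 2 * length (leaves_lists ts) + 1) + 1 \<le> 9 * (2 * card S) + 4"
    by simp
  then show ?thesis using T_index_triples_le[of "leaves_lists ts" rs] by (meson add_le_mono1 le_trans mult_le_mono2)
qed

lemma round_arith:
  fixes m B :: nat
  assumes "1 \<le> m" "1 \<le> B"
  shows "(2 * B^2 + B + 1) + (m * (9 * B + 4) + 1) + (4 * B + 4) + (B * (B * (m + 5) + 2) + 1) + 2 * B
     + (4 * B^2 + m * (10 * B + 7) + 2 * (B * (2 * B + 3 + m * (15 * B + 7))) + 4) + (B + 1) + 2
     \<le> 200 * m * B^2"
proof -
  obtain m' where m: "m = Suc m'" using assms(1) by (cases m) auto
  obtain b where b: "B = Suc b" using assms(2) by (cases B) auto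
  show ?thesis unfolding m b by (simp add: algebra_simps power2_eq_square)
qed

lemma loop_cost:
  assumes "INV S ts" "S \<noteq> {}" "distinct rs" "1 \<le> length rs"
  shows "T_bpmtr_loop f es rs ts \<le> (f + 1) * (200 * length rs * (2 * card S)^2)"
  using assms(1)
proof (induction f arbitrary: ts)
  let ?B = "2 * card S"
  let ?m = "length rs"
  case 0
  have "ts \<noteq> []" using 0 assms(2) by (auto simp: INV_def)
  then have "1 \<le> ?B" using INV_len_le[OF 0] by (cases ts) auto
  then have two: "2 \<le> 200 * ?m * ?B^2" using round_arith[OF assms(4), of ?B] by linarith
  have e: "T_bpmtr_loop 0 es rs ts = 2" by simp
  have f: "(0 + 1) * (200 * ?m * ?B^2) = 200 * ?m * ?B^2" by simp
  show ?case unfolding e f by (rule two)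
next
  let ?B = "2 * card S"
  let ?m = "length rs"
  case (Suc f)
  note inv = Suc.prems
  have "ts \<noteq> []" using inv assms(2) by (auto simp: INV_def)
  then have B1: "1 \<le> ?B" using INV_len_le[OF inv] by (cases ts) auto
  have kB: "length ts \<le> ?B" by (rule INV_len_le[OF inv])
  let ?ixs = "index_triples (leaves_lists ts) rs"
  let ?k = "length ts"
  define X where "X = T_leaves_lists ts + T_index_triples (leaves_lists ts) rs +
     2 * (T_length ts + T_down ?k) + T_scan_a es ?ixs (down ?k) (down ?k) None"
  have x1: "T_leaves_lists ts \<le> 2 * ?B^2 + ?B + 1" by (rule T_leaves_lists_le[OF inv])
  have x2: "T_index_triples (leaves_lists ts) rs \<le> ?m * (9 * ?B + 4) + 1" by (rule T_index_triples_ts[OF inv])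
  have x3: "2 * (T_length ts + T_down ?k) \<le> 4 * ?B + 4" using kB by (simp add: T_length T_down_eq)
  have x4: "T_scan_a es ?ixs (down ?k) (down ?k) None \<le> ?B * (?B * (?m + 5) + 2) + 1"
  proof -
    have "T_scan_a es ?ixs (down ?k) (down ?k) None \<le> ?k * (?k * (?m + 5) + 2) + 1"
      using T_scan_a_le[of es ?ixs "down ?k" "down ?k" None] by (simp add: length_down length_index_triples)
    also have "\<dots> \<le> ?B * (?B * (?m + 5) + 2) + 1"
      by (rule add_le_mono1[OF mult_le_mono[OF kB add_le_mono1[OF mult_le_mono1[OF kB]]]])
    finally show ?thesis .
  qed
  have X: "X \<le> (2 * ?B^2 + ?B + 1) + (?m * (9 * ?B + 4) + 1) + (4 * ?B + 4) + (?B * (?B * (?m + 5) + 2) + 1)"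
    unfolding X_def using x1 x2 x3 x4 by linarith
  have ar: "(2 * ?B^2 + ?B + 1) + (?m * (9 * ?B + 4) + 1) + (4 * ?B + 4) + (?B * (?B * (?m + 5) + 2) + 1) + 2 * ?B
     + (4 * ?B^2 + ?m * (10 * ?B + 7) + 2 * (?B * (2 * ?B + 3 + ?m * (15 * ?B + 7))) + 4) + (?B + 1) + 2
     \<le> 200 * ?m * ?B^2" by (rule round_arith[OF assms(4) B1])
  show ?case
  proof (cases "scan_a es ?ixs (down ?k) (down ?k) None")
    case None
    have "T_bpmtr_loop (Suc f) es rs ts = X + T_pick ts + 1" using None by (simp add: X_def)
    also have "\<dots> \<le> 200 * ?m * ?B^2" using X ar by simp
    finally show ?thesis by simp
  next
    case (Some x)
    obtain a b s where x: "x = (a,b,s)" by (cases x) auto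
    note sel = select_Some[OF Some[unfolded x]]
    have ab: "a \<noteq> b" "a < ?k" "b < ?k" using sel by auto
    define tb where "tb = merge_impl rs (ts!a) (ts!b)"
    note sl = step_list[OF inv assms(3) ab, folded tb_def]
    have eq: "T_bpmtr_loop (Suc f) es rs ts = X + (T_nth ts a + T_nth ts b + T_merge_impl rs (ts ! a) (ts ! b)
        + T_remove_two 0 a b ts + T_bpmtr_loop f es rs (tb # remove_two 0 a b ts)) + 1"
      using Some x by (simp add: X_def tb_def)
    have n1: "T_nth ts a + T_nth ts b \<le> 2 * ?B" using ab kB by (simp add: T_nth)
    have mg: "T_merge_impl rs (ts ! a) (ts ! b) \<le> 4 * ?B^2 + ?m * (10 * ?B + 7) + 2 * (?B * (2 * ?B + 3 + ?m * (15 * ?B + 7))) + 4"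
      by (rule T_merge_le) (use INV_sz_le[OF inv] ab in auto)
    have rt: "T_remove_two 0 a b ts \<le> ?B + 1" using kB by (simp add: T_remove_two_eq)
    have ih: "T_bpmtr_loop f es rs (tb # remove_two 0 a b ts) \<le> (f + 1) * (200 * ?m * ?B^2)"
      using Suc.IH sl by blast
    have "T_bpmtr_loop (Suc f) es rs ts \<le> 200 * ?m * ?B^2 + (f + 1) * (200 * ?m * ?B^2)"
      unfolding eq using X n1 mg rt ih ar by linarith
    then show ?thesis by simp
  qed
qed

lemma T_leaf_trees_eq: "T_leaf_trees xs = length xs + 1"
  by (induction xs) auto

lemma final_arith:
  fixes m n :: nat
  assumes "1 \<le> m" "1 \<le> n"
  shows "(n + 1) + (n + 1) + (n + 1) * (200 * m * (2 * n)^2) + 1 \<le> 2000 * m * n ^ 3"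
proof -
  obtain m' where m: "m = Suc m'" using assms(1) by (cases m) auto
  obtain b where b: "n = Suc b" using assms(2) by (cases n) auto
  show ?thesis unfolding m b by (simp add: algebra_simps power2_eq_square power3_eq_cube)
qed

theorem theorem2:
  "\<exists>c :: nat. \<forall>(es :: escore_fun) (S :: 'a set) (R :: ('a \<times> 'a \<times> 'a) set) ss rs.
     set ss = S \<and> distinct ss \<and> set rs = R \<and> distinct rs \<and>
     triplet_set_on S R \<and> R \<noteq> {} \<longrightarrow>
       bpmtr_output es R S (bpmtr_impl es rs ss) \<and>
       T_bpmtr_impl es rs ss \<le> c * card R * card S ^ 3"
proof (intro exI allI impI)
  fix es :: escore_fun and S :: "'a set" and R :: "('a \<times> 'a \<times> 'a) set" and ss rs
  assume h: "set ss = S \<and> distinct ss \<and> set rs = R \<and> distinct rs \<and> triplet_set_on S R \<and> R \<noteq> {}"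
  then have hS: "set ss = S" and dss: "distinct ss" and hR: "set rs = R" and drs: "distinct rs"
    and tr: "triplet_set_on S R" and Rne: "R \<noteq> {}" by auto
  obtain x y z where xyz: "(x,y,z) \<in> R" using Rne by auto
  have Sne: "S \<noteq> {}" using triplet_mem[OF tr xyz] by auto
  show "bpmtr_output es R S (bpmtr_impl es rs ss) \<and> T_bpmtr_impl es rs ss \<le> 2000 * card R * card S ^ 3"
  proof
    show "bpmtr_output es R S (bpmtr_impl es rs ss)"
      using bpmtr_correct[OF dss drs, of es] tr Sne unfolding hS hR by blast
  next
    have n: "card S = length ss" using hS dss distinct_card by blast
    have m: "card R = length rs" using hR drs distinct_card by blast
    have m1: "1 \<le> length rs" using Rne hR by (cases rs) auto
    have n1: "1 \<le> length ss" using Sne hS by (cases ss) auto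
    have inv: "INV S (leaf_trees ss)" using INV_init[OF dss] hS by simp
    have lp: "T_bpmtr_loop (length ss) es rs (leaf_trees ss) \<le> (length ss + 1) * (200 * length rs * (2 * length ss)^2)"
      using loop_cost[OF inv Sne drs m1, of "length ss" es] n by simp
    have "T_bpmtr_impl es rs ss = (length ss + 1) + (length ss + 1) + T_bpmtr_loop (length ss) es rs (leaf_trees ss) + 1"
      by (simp add: T_length T_leaf_trees_eq)
    also have "\<dots> \<le> (length ss + 1) + (length ss + 1) + (length ss + 1) * (200 * length rs * (2 * length ss)^2) + 1"
      using lp by linarith
    also have "\<dots> \<le> 2000 * length rs * length ss ^ 3" by (rule final_arith[OF m1 n1])
    finally show "T_bpmtr_impl es rs ss \<le> 2000 * card R * card S ^ 3" using n m by simp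
  qed
qed


end
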